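(* Under the standing assumptions, $H_{++}\subset\mathcal{D}(V)$ and $$\mathcal{D}(V)=\{\eta\in H_+ \,:\, 0\in\mathcal{C}(\eta)\},$$ where $0$ denotes the identically zero control.
   Context: Fix $T>0$, $r>0$, $\rho>0$. $L^2_{-T}:=L^2([-T,0];\mathbb{R})$, $W^{1,2}_{-T}:=W^{1,2}([-T,0];\mathbb{R})$, $H:=\mathbb{R}\times L^2_{-T}$ with elements $\eta=(\eta_0,\eta_1)$, $H_+:=(0,+\infty)\times L^2_{-T}$, $H_{++}:=(0,+\infty)\times\{\eta_1\in L^2_{-T}:\eta_1\ge 0 \text{ a.e.}\}$. Standing assumptions: $a\in W^{1,2}_{-T}$, $a\ge0$, $a(-T)=0$; $f_0:[0,\infty)\times\mathbb{R}\to\mathbb{R}$ jointly concave, nondecreasing in its second variable, Lipschitz with constant $C_{f_0}$, $f_0(0,y)>0$ for all $y>0$, extended to $\mathbb{R}^2$ by $f_0(x,y):=f_0(0,y)$ for $x<0$; $U_1\in C([0,\infty))\cap C^2((0,\infty))$ with $U_1'>0$, $U_1'(0^+)=+\infty$, $U_1''<0$, $U_1$ bounded; $U_2\in C((0,\infty))$ increasing, concave, bounded above, with $\int_0^\infty e^{-\rho t}U_2(e^{-C_{f_0}t})dt>-\infty$. For $\eta\in H_+$ and $c\in L^1_{loc}([0,\infty);[0,\infty))$, $x(\cdot;\eta,c)$ is the unique function $x:[-T,\infty)\to\mathbb{R}$, continuous on $[0,\infty)$, with $x=\eta_1$ a.e. on $[-T,0)$ and $x(t)=\eta_0+\int_0^t[r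 x(s)+f_0(x(s),\int_{-T}^0a(\xi)x(s+\xi)d\xi)-c(s)]ds$ for $t\ge 0$. Admissible controls: $\mathcal{C}(\eta):=\{c\in L^1_{loc}([0,\infty);[0,\infty)) : x(t;\eta,c)>0\ \forall t\ge0\}$. Objective $J(\eta;c):=\int_0^\infty e^{-\rho t}[U_1(c(t))+U_2(x(t;\eta,c))]dt$, value function $V(\eta):=\sup_{c\in\mathcal{C}(\eta)}J(\eta;c)$ (with $\sup\emptyset=-\infty$), and $\mathcal{D}(V):=\{\eta\in H_+: V(\eta)>-\infty\}$. *)

theory Defs
  imports "HOL-Analysis.Analysis"
begin

text \<open>Square integrable functions on [-T,0] (representatives of elements of L^2).\<close>
definition L2 :: "real \<Rightarrow> (real \<Rightarrow> real) \<Rightarrow> bool" where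
  "L2 T g \<longleftrightarrow> set_borel_measurable lborel {-T..0} g \<and>
     set_integrable lborel {-T..0} (\<lambda>\<xi>. (g \<xi>)^2)"

text \<open>W^{1,2}([-T,0]): absolutely continuous with L^2 weak derivative.\<close>
definition W12 :: "real \<Rightarrow> (real \<Rightarrow> real) \<Rightarrow> bool" where
  "W12 T a \<longleftrightarrow> (\<exists>a'. L2 T a' \<and>
     (\<forall>t\<in>{-T..0}. a t = a (-T) + (LINT s:{-T..t}|lborel. a' s)))"

definition Hplus :: "real \<Rightarrow> (real \<times> (real \<Rightarrow> real)) set" where
  "Hplus T = {\<eta>. fst \<eta> > 0 \<and> L2 T (snd \<eta>)}"

definition Hpp :: "real \<Rightarrow> (real \<times> (real \<Rightarrow> real)) set" where
  "Hpp T = {\<eta> \<in> Hplus T. AE \<xi> in lborel. \<xi> \<in> {-T..0} \<longrightarrow> 0 \<le> snd \<eta> \<xi>}"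

definition eint :: "(real \<Rightarrow> real) \<Rightarrow> real set \<Rightarrow> ereal" where
  "eint g S = enn2ereal (\<integral>\<^sup>+ t. indicator S t * ennreal (g t) \<partial>lborel)
             - enn2ereal (\<integral>\<^sup>+ t. indicator S t * ennreal (- g t) \<partial>lborel)"

text \<open>The state equation. The state is fixed pointwise to eta_1 on [-T,0) and to 0 before -T
  (this only selects a canonical representative, the integrals see only the a.e. class).\<close>
definition state_eq ::
  "real \<Rightarrow> real \<Rightarrow> (real \<Rightarrow> real) \<Rightarrow> (real \<Rightarrow> real \<Rightarrow> real) \<Rightarrow> real \<times> (real \<Rightarrow> real)
    \<Rightarrow> (real \<Rightarrow> real) \<Rightarrow> (real \<Rightarrow> real) \<Rightarrow> bool" where
  "state_eq T r a f0 \<eta> c x \<longleftrightarrow>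
     (\<forall>t < - T. x t = 0) \<and> (\<forall>t\<in>{-T..<0}. x t = snd \<eta> t) \<and> continuous_on {0..} x \<and>
     (\<forall>t\<ge>0. set_integrable lborel {0..t}
                (\<lambda>s. r * x s + f0 (x s) (LINT \<xi>:{-T..0}|lborel. a \<xi> * x (s + \<xi>)) - c s) \<and>
              x t = fst \<eta> + (LINT s:{0..t}|lborel.
                r * x s + f0 (x s) (LINT \<xi>:{-T..0}|lborel. a \<xi> * x (s + \<xi>)) - c s))"

definition state ::
  "real \<Rightarrow> real \<Rightarrow> (real \<Rightarrow> real) \<Rightarrow> (real \<Rightarrow> real \<Rightarrow> real) \<Rightarrow> real \<times> (real \<Rightarrow> real)
    \<Rightarrow> (real \<Rightarrow> real) \<Rightarrow> real \<Rightarrow> real" where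
  "state T r a f0 \<eta> c = (THE x. state_eq T r a f0 \<eta> c x)"

definition ctrl :: "(real \<Rightarrow> real) \<Rightarrow> bool" where
  "ctrl c \<longleftrightarrow> (\<forall>t\<ge>0. 0 \<le> c t) \<and> (\<forall>t\<ge>0. set_integrable lborel {0..t} c)"

definition admissible ::
  "real \<Rightarrow> real \<Rightarrow> (real \<Rightarrow> real) \<Rightarrow> (real \<Rightarrow> real \<Rightarrow> real) \<Rightarrow> real \<times> (real \<Rightarrow> real)
    \<Rightarrow> (real \<Rightarrow> real) set" where
  "admissible T r a f0 \<eta> = {c. ctrl c \<and> (\<forall>t\<ge>0. state T r a f0 \<eta> c t > 0)}"

definition J ::
  "real \<Rightarrow> real \<Rightarrow> real \<Rightarrow> (real \<Rightarrow> real) \<Rightarrow> (real \<Rightarrow> real \<Rightarrow> real) \<Rightarrow> (real \<Rightarrow> real)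
    \<Rightarrow> (real \<Rightarrow> real) \<Rightarrow> real \<times> (real \<Rightarrow> real) \<Rightarrow> (real \<Rightarrow> real) \<Rightarrow> ereal" where
  "J T r \<rho> a f0 U1 U2 \<eta> c =
     eint (\<lambda>t. exp (- \<rho> * t) * (U1 (c t) + U2 (state T r a f0 \<eta> c t))) {0..}"

definition V ::
  "real \<Rightarrow> real \<Rightarrow> real \<Rightarrow> (real \<Rightarrow> real) \<Rightarrow> (real \<Rightarrow> real \<Rightarrow> real) \<Rightarrow> (real \<Rightarrow> real)
    \<Rightarrow> (real \<Rightarrow> real) \<Rightarrow> real \<times> (real \<Rightarrow> real) \<Rightarrow> ereal" where
  "V T r \<rho> a f0 U1 U2 \<eta> = (SUP c \<in> admissible T r a f0 \<eta>. J T r \<rho> a f0 U1 U2 \<eta> c)"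

definition DV ::
  "real \<Rightarrow> real \<Rightarrow> real \<Rightarrow> (real \<Rightarrow> real) \<Rightarrow> (real \<Rightarrow> real \<Rightarrow> real) \<Rightarrow> (real \<Rightarrow> real)
    \<Rightarrow> (real \<Rightarrow> real) \<Rightarrow> (real \<times> (real \<Rightarrow> real)) set" where
  "DV T r \<rho> a f0 U1 U2 = {\<eta> \<in> Hplus T. V T r \<rho> a f0 U1 U2 \<eta> > -\<infinity>}"

end

theory Submission
  imports Defs
begin


lemma crossing:
  fixes v :: "real \<Rightarrow> real" and st K :: real
  assumes cont: "continuous_on {st..} v" and v0: "v st > 0" and K: "K \<ge> 0"
    and hyp: "\<And>u t B. st \<le> u \<Longrightarrow> u \<le> t \<Longrightarrow> (\<And>\<tau>. \<tau>\<in>{st..t} \<Longrightarrow> 0 \<le> v \<tau>)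
               \<Longrightarrow> (\<And>\<tau>. \<tau>\<in>{u..t} \<Longrightarrow> v \<tau> \<le> B) \<Longrightarrow> v t - v u \<ge> - K * (t - u) * B"
    and t: "t \<ge> st"
  shows "v t > 0"
proof (rule ccontr)
  assume "\<not> v t > 0"
  define S where "S = {\<tau> \<in> {st..}. v \<tau> \<le> 0}"
  have clS: "closed S" unfolding S_def
    by (rule continuous_on_closed_Collect_le[OF cont]) (auto intro: continuous_intros)
  have tS: "t \<in> S" using \<open>\<not> v t > 0\<close> t by (auto simp: S_def)
  have bdd: "bdd_below S" by (auto simp: S_def bdd_below_def)
  define t1 where "t1 = Inf S"
  have t1S: "t1 \<in> S" unfolding t1_def using closed_contains_Inf[OF _ bdd clS] tS by auto
  hence t1ge: "t1 \<ge> st" and vt1: "v t1 \<le> 0" by (auto simp: S_def)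
  have pos: "v \<tau> > 0" if "st \<le> \<tau>" "\<tau> < t1" for \<tau>
  proof (rule ccontr)
    assume "\<not> v \<tau> > 0"
    hence "\<tau> \<in> S" using that by (auto simp: S_def)
    hence "t1 \<le> \<tau>" unfolding t1_def using bdd by (simp add: cInf_lower)
    thus False using that by simp
  qed
  have t1gt: "t1 > st" using t1ge vt1 v0 by (cases "t1 = st") auto
  have vt1nn: "v t1 \<ge> 0"
  proof (rule ccontr)
    assume neg: "\<not> v t1 \<ge> 0"
    from cont t1ge have "\<forall>e>0. \<exists>d>0. \<forall>x'\<in>{st..}. dist x' t1 < d \<longrightarrow> dist (v x') (v t1) < e"
      unfolding continuous_on_iff by auto
    then obtain d where d: "d > 0" "\<forall>x'\<in>{st..}. dist x' t1 < d \<longrightarrow> dist (v x') (v t1) < - v t1"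
      using neg by (meson neg_0_less_iff_less not_le)
    define x' where "x' = max st (t1 - d/2)"
    have "dist x' t1 < d" using d t1gt by (auto simp: x'_def dist_real_def)
    hence "dist (v x') (v t1) < - v t1" using d(2) by (auto simp: x'_def)
    hence "v x' < 0" by (auto simp: dist_real_def)
    moreover have "v x' > 0" using pos[of x'] d t1gt by (auto simp: x'_def)
    ultimately show False by simp
  qed
  have nn: "0 \<le> v \<tau>" if "\<tau> \<in> {st..t1}" for \<tau>
    using pos[of \<tau>] vt1nn that by (cases "\<tau> = t1") auto
  define u where "u = max st (t1 - 1/(2*K+2))"
  have u: "st \<le> u" "u < t1" "t1 - u \<le> 1/(2*K+2)" using t1gt K by (auto simp: u_def)
  have vu: "v u > 0" using pos u by auto
  have "\<exists>p\<in>{u..t1}. \<forall>y\<in>{u..t1}. v y \<le> v p"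
    by (rule continuous_attains_sup) (use u in \<open>auto intro: continuous_on_subset[OF cont]\<close>)
  then obtain p where p: "p \<in> {u..t1}" "\<And>y. y\<in>{u..t1} \<Longrightarrow> v y \<le> v p" by blast
  have m: "v p > 0" using p(2)[of u] u vu by auto
  have h: "v t1 - v p \<ge> - K * (t1 - p) * v p"
    by (rule hyp) (use p u nn in auto)
  have "K * (t1 - p) \<le> K * (1/(2*K+2))" using p u K by (intro mult_left_mono) auto
  also have "\<dots> \<le> 1/2" using K by (simp add: field_simps)
  finally have "K * (t1 - p) * v p \<le> 1/2 * v p" using m by (intro mult_right_mono) auto
  hence "v t1 \<ge> v p / 2" using h by simp
  thus False using m vt1 by simp
qed


locale dde =
  fixes T r Cf :: real and a :: "real \<Rightarrow> real" and f0 :: "real \<Rightarrow> real \<Rightarrow> real"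
    and \<eta>1 :: "real \<Rightarrow> real"
  assumes T: "T > 0" and r: "r > 0"
    and a_cont: "continuous_on {-T..0} a" and a_nonneg: "\<forall>t\<in>{-T..0}. 0 \<le> a t"
    and f0_lip: "Cf-lipschitz_on ({0..} \<times> UNIV) (\<lambda>(x, y). f0 x y)"
    and f0_mono: "\<forall>x\<ge>0. mono (f0 x)" and f0_ext: "\<forall>x<0. \<forall>y. f0 x y = f0 0 y"
    and f0_pos: "\<forall>y>0. f0 0 y > 0"
    and eta1: "L2 T \<eta>1"
begin

lemma Cf_nn: "Cf \<ge> 0" using f0_lip by (simp add: lipschitz_on_def)

lemma f0_max: "f0 x y = f0 (max x 0) y"
  using f0_ext by (cases "x < 0") auto

lemma f0_lip2: "\<bar>f0 x1 y1 - f0 x2 y2\<bar> \<le> Cf * (\<bar>x1 - x2\<bar> + \<bar>y1 - y2\<bar>)"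
proof -
  have "dist ((\<lambda>(x, y). f0 x y) (max x1 0, y1)) ((\<lambda>(x, y). f0 x y) (max x2 0, y2))
        \<le> Cf * dist (max x1 0, y1) (max x2 0, y2)"
    using f0_lip unfolding lipschitz_on_def by (auto)
  moreover have "dist (max x1 0, y1) (max x2 0, y2) \<le> \<bar>x1 - x2\<bar> + \<bar>y1 - y2\<bar>"
  proof -
    have "dist (max x1 0, y1) (max x2 0, y2) \<le> \<bar>max x1 0 - max x2 0\<bar> + \<bar>y1 - y2\<bar>"
      unfolding dist_Pair_Pair dist_real_def by (rule order_trans[OF sqrt_sum_squares_le_sum_abs]) simp
    also have "\<dots> \<le> \<bar>x1 - x2\<bar> + \<bar>y1 - y2\<bar>" by (auto simp: max_def abs_if)
    finally show ?thesis .
  qed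
  ultimately have "dist (f0 (max x1 0) y1) (f0 (max x2 0) y2) \<le> Cf * (\<bar>x1 - x2\<bar> + \<bar>y1 - y2\<bar>)"
    using Cf_nn by simp (meson mult_left_mono order_trans)
  thus ?thesis by (simp add: dist_real_def f0_max[of x1] f0_max[of x2])
qed

lemma f0_mono2: "y1 \<le> y2 \<Longrightarrow> f0 x y1 \<le> f0 x y2"
  using f0_mono f0_max[of x] by (metis max.cobounded2 monoD)

lemma f00: "f0 0 0 \<ge> 0"
proof -
  have "f0 0 0 \<ge> f0 0 y - Cf * y" if "y > 0" for y
    using f0_lip2[of 0 y 0 0] that by (simp add: abs_le_iff)
  hence h: "f0 0 0 > - Cf * y" if "y > 0" for y using f0_pos that by force
  show ?thesis
  proof (rule ccontr)
    assume "\<not> f0 0 0 \<ge> 0"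
    define y where "y = - f0 0 0 / (2*(Cf+1))"
    have y: "y > 0" using \<open>\<not> f0 0 0 \<ge> 0\<close> Cf_nn by (simp add: y_def field_simps)
    have "Cf * y \<le> - f0 0 0 / 2" using \<open>\<not> f0 0 0 \<ge> 0\<close> Cf_nn
      by (simp add: y_def field_simps)
    thus False using h[OF y] \<open>\<not> f0 0 0 \<ge> 0\<close> by simp
  qed
qed

lemma f0_cont: "continuous_on UNIV (\<lambda>p. f0 (fst p) (snd p))"
proof (rule lipschitz_on_continuous_on)
  show "(2*Cf)-lipschitz_on UNIV (\<lambda>p. f0 (fst p) (snd p))"
  proof (rule lipschitz_onI)
    fix p q :: "real \<times> real"
    have "dist (f0 (fst p) (snd p)) (f0 (fst q) (snd q)) \<le> Cf * (\<bar>fst p - fst q\<bar> + \<bar>snd p - snd q\<bar>)"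
      using f0_lip2 by (simp add: dist_real_def)
    also have "\<bar>fst p - fst q\<bar> \<le> dist p q"
      by (metis dist_fst_le dist_real_def)
    hence "Cf * (\<bar>fst p - fst q\<bar> + \<bar>snd p - snd q\<bar>) \<le> Cf * (dist p q + dist p q)"
      using Cf_nn dist_snd_le[of p q] by (intro mult_left_mono) (auto simp: dist_real_def)
    finally show "dist (f0 (fst p) (snd p)) (f0 (fst q) (snd q)) \<le> 2 * Cf * dist p q" by simp
  qed (use Cf_nn in simp)
qed

lemma f0_meas[measurable]: "(\<lambda>p. f0 (fst p) (snd p)) \<in> borel_measurable borel"
  using f0_cont by (rule borel_measurable_continuous_onI)

lemma a_int: "set_integrable lborel {-T..0} a"
  unfolding set_integrable_def by (rule borel_integrable_compact[OF compact_Icc a_cont])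

lemma aI_meas[measurable]: "(\<lambda>\<xi>. indicator {-T..0} \<xi> * a \<xi>) \<in> borel_measurable borel"
  using borel_measurable_continuous_on_indicator[OF _ a_cont] by simp

lemma A_bound: "\<exists>A>0. \<forall>t\<in>{-T..0}. \<bar>a t\<bar> \<le> A"
proof -
  have "bounded (a ` {-T..0})" by (rule compact_imp_bounded[OF compact_continuous_image[OF a_cont compact_Icc]])
  then obtain A where "A > 0" "\<forall>x\<in>a ` {-T..0}. norm x \<le> A" by (auto simp: bounded_pos)
  thus ?thesis by auto
qed

definition Aint where "Aint = (LINT \<xi>:{-T..0}|lborel. a \<xi>)"

lemma Aint_nn: "Aint \<ge> 0"
  unfolding Aint_def set_lebesgue_integral_def using a_nonneg
  by (intro integral_nonneg_AE AE_I2) (auto simp: indicator_def)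

lemma eta1_meas[measurable]: "(\<lambda>x. indicator {-T..0} x * \<eta>1 x) \<in> borel_measurable borel"
  using eta1 unfolding L2_def set_borel_measurable_def by simp

lemma abs_le_sq: "\<bar>y::real\<bar> \<le> 1 + y^2"
proof -
  have "0 \<le> (\<bar>y\<bar> - 1)^2" by simp
  hence "2 * \<bar>y\<bar> \<le> \<bar>y\<bar> * \<bar>y\<bar> + 1" by (simp add: power2_eq_square algebra_simps)
  hence "2 * \<bar>y\<bar> \<le> y * y + 1" by (simp add: abs_mult_self_eq)
  thus ?thesis by (simp add: power2_eq_square)
qed

lemma eta1_int: "set_integrable lborel {-T..0} \<eta>1"
proof (rule set_integrable_bound[where f="\<lambda>x. 1 + (\<eta>1 x)^2"])
  have "set_integrable lborel {-T..0} (\<lambda>x. 1::real)"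
    unfolding set_integrable_def by (rule borel_integrable_compact) (auto intro: continuous_intros)
  moreover have "set_integrable lborel {-T..0} (\<lambda>x. (\<eta>1 x)^2)" using eta1 unfolding L2_def by simp
  ultimately show "set_integrable lborel {-T..0} (\<lambda>x. 1 + (\<eta>1 x)^2)" by (rule set_integral_add)
  show "set_borel_measurable lborel {-T..0} \<eta>1" using eta1 unfolding L2_def by simp
  show "AE x\<in>{-T..0} in lborel. norm (\<eta>1 x) \<le> norm (1 + (\<eta>1 x)^2)"
  proof (intro AE_I2 impI)
    fix x
    have "\<bar>\<eta>1 x\<bar> \<le> 1 + (\<eta>1 x)^2" by (rule abs_le_sq)
    thus "norm (\<eta>1 x) \<le> norm (1 + (\<eta>1 x)^2)" by simp
  qed
qed

definition g1 where "g1 t = indicator {-T..<0} t * \<eta>1 t"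

lemma g1_alt: "g1 t = indicator {-T..<0} t * (indicator {-T..0} t * \<eta>1 t)"
  by (auto simp: g1_def indicator_def)

lemma g1_meas[measurable]: "g1 \<in> borel_measurable borel"
  unfolding g1_alt[abs_def] by measurable

lemma g1_int: "integrable lborel g1"
proof -
  have i: "integrable lborel (\<lambda>t. indicator {-T..0} t *\<^sub>R \<eta>1 t)"
    using eta1_int unfolding set_integrable_def .
  have "integrable lborel (\<lambda>t. indicator {-T..<0} t *\<^sub>R (indicator {-T..0} t *\<^sub>R \<eta>1 t))"
    by (rule integrable_mult_indicator[OF _ i]) simp
  thus ?thesis unfolding g1_alt[abs_def] real_scaleR_def .
qed

definition xe :: "(real \<Rightarrow> real) \<Rightarrow> real \<Rightarrow> real" where
  "xe \<phi> t = (if t < -T then 0 else if t < 0 then \<eta>1 t else \<phi> t)"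

lemma xe_eq: "xe \<phi> t = g1 t + indicator {0..} t * \<phi> t"
  using T by (auto simp: xe_def g1_def indicator_def)

lemma xe_meas[measurable]: "continuous_on {0..} \<phi> \<Longrightarrow> xe \<phi> \<in> borel_measurable borel"
proof -
  assume c: "continuous_on {0..} \<phi>"
  have "(\<lambda>t. indicator {0..} t *\<^sub>R \<phi> t) \<in> borel_measurable borel"
    by (rule borel_measurable_continuous_on_indicator[OF _ c]) simp
  hence "(\<lambda>t. indicator {0..} t * \<phi> t) \<in> borel_measurable borel" by simp
  thus ?thesis unfolding xe_eq[abs_def] by measurable
qed

lemma xe_nonneg: "t \<ge> 0 \<Longrightarrow> xe \<phi> t = \<phi> t" using T by (simp add: xe_def)

definition Amax where "Amax = (SOME A. A > 0 \<and> (\<forall>t\<in>{-T..0}. \<bar>a t\<bar> \<le> A))"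

lemma Amax: "Amax > 0" "t \<in> {-T..0} \<Longrightarrow> \<bar>a t\<bar> \<le> Amax"
  using someI_ex[OF A_bound] unfolding Amax_def by auto

definition N1 where "N1 = (LINT t|lborel. \<bar>g1 t\<bar>)"

definition G :: "(real \<Rightarrow> real) \<Rightarrow> real \<Rightarrow> real" where
  "G x s = (LINT \<xi>:{-T..0}|lborel. a \<xi> * x (s + \<xi>))"

lemma g1_shift_int: "integrable lborel (\<lambda>\<xi>. \<bar>g1 (s + \<xi>)\<bar>)"
  using lborel_integrable_real_affine[OF g1_int, of 1 s] by (intro integrable_abs) simp

lemma g1_shift_integral: "(LINT \<xi>|lborel. \<bar>g1 (s + \<xi>)\<bar>) = N1"
  unfolding N1_def using lborel_integral_real_affine[of 1 "\<lambda>t. \<bar>g1 t\<bar>" s] by simp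

lemma const_set_int: "set_integrable lborel {l..u::real} (\<lambda>x. c::real)"
  unfolding set_integrable_def by (rule borel_integrable_compact) (auto intro: continuous_intros compact_Icc)

lemma set_integrable_uminus: "set_integrable M A (f :: _ \<Rightarrow> real) \<Longrightarrow> set_integrable M A (\<lambda>x. - f x)"
  unfolding set_integrable_def by (drule integrable_minus) simp

lemma xe_shift_bound:
  assumes s: "s \<ge> 0" and bnd: "\<And>u. u \<in> {0..s} \<Longrightarrow> \<bar>\<phi> u\<bar> \<le> B" and \<xi>: "\<xi> \<in> {-T..0}"
  shows "\<bar>xe \<phi> (s + \<xi>)\<bar> \<le> \<bar>g1 (s + \<xi>)\<bar> + B"
proof (cases "s + \<xi> < 0")
  case True
  hence "xe \<phi> (s + \<xi>) = g1 (s + \<xi>)" using s \<xi> by (auto simp: xe_def g1_def)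
  moreover have "B \<ge> 0" using bnd[of 0] s by auto
  ultimately show ?thesis by simp
next
  case False
  hence "xe \<phi> (s + \<xi>) = \<phi> (s + \<xi>)" by (simp add: xe_nonneg)
  moreover have "\<bar>\<phi> (s + \<xi>)\<bar> \<le> B" using bnd False \<xi> by auto
  ultimately show ?thesis by simp
qed

lemma G_int:
  assumes cont: "continuous_on {0..} \<phi>" and s: "s \<ge> 0" and bnd: "\<And>u. u \<in> {0..s} \<Longrightarrow> \<bar>\<phi> u\<bar> \<le> B"
  shows "set_integrable lborel {-T..0} (\<lambda>\<xi>. a \<xi> * xe \<phi> (s + \<xi>))"
    and "\<bar>G (xe \<phi>) s\<bar> \<le> Amax * (N1 + T * B)"
proof -
  have i1: "set_integrable lborel {-T..0} (\<lambda>\<xi>. \<bar>g1 (s + \<xi>)\<bar>)"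
    unfolding set_integrable_def by (intro integrable_mult_indicator g1_shift_int) simp
  have i2: "set_integrable lborel {-T..0} (\<lambda>\<xi>. Amax * (\<bar>g1 (s + \<xi>)\<bar> + B))"
    by (intro set_integrable_mult_right set_integral_add i1 const_set_int)
  have m: "set_borel_measurable lborel {-T..0} (\<lambda>\<xi>. a \<xi> * xe \<phi> (s + \<xi>))"
  proof -
    have "(\<lambda>\<xi>. (indicator {-T..0} \<xi> * a \<xi>) * xe \<phi> (s + \<xi>)) \<in> borel_measurable borel"
      using cont by measurable
    thus ?thesis unfolding set_borel_measurable_def by (simp add: mult.assoc)
  qed
  have pb: "\<bar>a \<xi> * xe \<phi> (s + \<xi>)\<bar> \<le> Amax * (\<bar>g1 (s + \<xi>)\<bar> + B)" if "\<xi> \<in> {-T..0}" for \<xi>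
    unfolding abs_mult
    by (intro mult_mono Amax that xe_shift_bound[OF s bnd]) (use Amax in auto)
  show int: "set_integrable lborel {-T..0} (\<lambda>\<xi>. a \<xi> * xe \<phi> (s + \<xi>))"
  proof (rule set_integrable_bound[OF i2 m])
    show "AE x\<in>{-T..0} in lborel. norm (a x * xe \<phi> (s + x)) \<le> norm (Amax * (\<bar>g1 (s + x)\<bar> + B))"
      using pb by (intro AE_I2 impI) (auto intro: order_trans[OF _ abs_ge_self])
  qed
  have "G (xe \<phi>) s \<le> (LINT \<xi>:{-T..0}|lborel. Amax * (\<bar>g1 (s + \<xi>)\<bar> + B))"
    unfolding G_def using pb by (intro set_integral_mono int i2) (auto simp: abs_le_iff)
  moreover have "- G (xe \<phi>) s \<le> (LINT \<xi>:{-T..0}|lborel. Amax * (\<bar>g1 (s + \<xi>)\<bar> + B))"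
  proof -
    have "- G (xe \<phi>) s = (LINT \<xi>:{-T..0}|lborel. - (a \<xi> * xe \<phi> (s + \<xi>)))"
      unfolding G_def by (simp add: set_integral_uminus[OF int])
    also have "\<dots> \<le> (LINT \<xi>:{-T..0}|lborel. Amax * (\<bar>g1 (s + \<xi>)\<bar> + B))"
      using pb by (intro set_integral_mono i2) (auto simp: abs_le_iff intro: set_integrable_uminus int)
    finally show ?thesis .
  qed
  moreover have "(LINT \<xi>:{-T..0}|lborel. Amax * (\<bar>g1 (s + \<xi>)\<bar> + B)) \<le> Amax * (N1 + T * B)"
  proof -
    have "(LINT \<xi>:{-T..0}|lborel. Amax * (\<bar>g1 (s + \<xi>)\<bar> + B))
        = Amax * ((LINT \<xi>:{-T..0}|lborel. \<bar>g1 (s + \<xi>)\<bar>) + (LINT \<xi>:{-T..0}|lborel. B))"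
      by (simp add: set_integral_mult_right set_integral_add(2)[OF i1 const_set_int])
    also have "(LINT \<xi>:{-T..0}|lborel. B) = T * B"
      using T by (subst set_integral_const) (auto simp: measure_lborel_Icc)
    finally have eq: "(LINT \<xi>:{-T..0}|lborel. Amax * (\<bar>g1 (s + \<xi>)\<bar> + B))
        = Amax * ((LINT \<xi>:{-T..0}|lborel. \<bar>g1 (s + \<xi>)\<bar>) + T * B)" .
    have "(LINT \<xi>:{-T..0}|lborel. \<bar>g1 (s + \<xi>)\<bar>) \<le> (LINT \<xi>|lborel. \<bar>g1 (s + \<xi>)\<bar>)"
      unfolding set_lebesgue_integral_def
      by (intro integral_mono integrable_mult_indicator g1_shift_int)
         (auto simp: indicator_def)
    hence "(LINT \<xi>:{-T..0}|lborel. \<bar>g1 (s + \<xi>)\<bar>) \<le> N1" using g1_shift_integral by simp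
    thus ?thesis unfolding eq using Amax by (intro mult_left_mono) auto
  qed
  ultimately show "\<bar>G (xe \<phi>) s\<bar> \<le> Amax * (N1 + T * B)" by linarith
qed

lemma cont_bound:
  fixes \<phi> :: "real \<Rightarrow> real"
  assumes "continuous_on {0..} \<phi>"
  obtains B where "\<And>u. u \<in> {0..N} \<Longrightarrow> \<bar>\<phi> u\<bar> \<le> B"
proof -
  have "continuous_on {0..N} \<phi>" by (rule continuous_on_subset[OF assms]) auto
  hence "bounded (\<phi> ` {0..N})" by (intro compact_imp_bounded compact_continuous_image) auto
  then obtain B where "\<forall>x\<in>\<phi> ` {0..N}. norm x \<le> B" by (auto simp: bounded_iff)
  thus ?thesis using that by (metis image_eqI real_norm_def)
qed

lemma G_meas[measurable]:
  assumes cont: "continuous_on {0..} \<phi>"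
  shows "(\<lambda>s. G (xe \<phi>) s) \<in> borel_measurable borel"
proof -
  have m: "(\<lambda>p. (indicator {-T..0} (snd p) * a (snd p)) * xe \<phi> (fst p + snd p))
          \<in> borel_measurable (lborel \<Otimes>\<^sub>M lborel)"
    using cont by measurable
  have "(\<lambda>s. \<integral>\<xi>. (indicator {-T..0} \<xi> * a \<xi>) * xe \<phi> (s + \<xi>) \<partial>lborel) \<in> borel_measurable lborel"
    using m by (intro lborel.borel_measurable_lebesgue_integral) (simp add: case_prod_beta')
  moreover have "G (xe \<phi>) s = (\<integral>\<xi>. (indicator {-T..0} \<xi> * a \<xi>) * xe \<phi> (s + \<xi>) \<partial>lborel)" for s
    unfolding G_def set_lebesgue_integral_def by (simp add: mult.assoc)
  ultimately show ?thesis by simp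
qed

lemma G_diff:
  assumes c1: "continuous_on {0..} \<phi>" and c2: "continuous_on {0..} \<psi>" and s: "s \<ge> 0"
    and B: "B \<ge> 0" and d: "\<And>u. u \<in> {0..s} \<Longrightarrow> \<phi> u - \<psi> u \<le> B"
  shows "G (xe \<phi>) s - G (xe \<psi>) s \<le> Aint * B"
proof -
  obtain B1 where B1: "\<And>u. u \<in> {0..s} \<Longrightarrow> \<bar>\<phi> u\<bar> \<le> B1" using cont_bound[OF c1] by blast
  obtain B2 where B2: "\<And>u. u \<in> {0..s} \<Longrightarrow> \<bar>\<psi> u\<bar> \<le> B2" using cont_bound[OF c2] by blast
  note i1 = G_int(1)[OF c1 s B1] and i2 = G_int(1)[OF c2 s B2]
  have "G (xe \<phi>) s - G (xe \<psi>) s = (LINT \<xi>:{-T..0}|lborel. a \<xi> * xe \<phi> (s + \<xi>) - a \<xi> * xe \<psi> (s + \<xi>))"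
    unfolding G_def by (rule set_integral_diff(2)[OF i1 i2, symmetric])
  also have "\<dots> \<le> (LINT \<xi>:{-T..0}|lborel. a \<xi> * B)"
  proof (rule set_integral_mono[OF set_integral_diff(1)[OF i1 i2]])
    show "set_integrable lborel {-T..0} (\<lambda>\<xi>. a \<xi> * B)" by (intro set_integrable_mult_left a_int)
    fix \<xi> assume \<xi>: "\<xi> \<in> {-T..0}"
    have "xe \<phi> (s + \<xi>) - xe \<psi> (s + \<xi>) \<le> B"
      using d[of "s + \<xi>"] \<xi> B by (cases "s + \<xi> < 0") (auto simp: xe_def)
    hence "a \<xi> * (xe \<phi> (s + \<xi>) - xe \<psi> (s + \<xi>)) \<le> a \<xi> * B"
      using a_nonneg \<xi> by (intro mult_left_mono) auto
    thus "a \<xi> * xe \<phi> (s + \<xi>) - a \<xi> * xe \<psi> (s + \<xi>) \<le> a \<xi> * B" by (simp add: algebra_simps)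
  qed
  also have "\<dots> = Aint * B" unfolding Aint_def by (rule set_integral_mult_left)
  finally show ?thesis .
qed

definition Fn :: "(real \<Rightarrow> real) \<Rightarrow> (real \<Rightarrow> real) \<Rightarrow> real \<Rightarrow> real" where
  "Fn c x s = r * x s + f0 (x s) (G x s) - c s"

definition Lc where "Lc = r + Cf + Cf * Aint"

lemma Lc_pos: "Lc > 0"
proof -
  have "Cf * Aint \<ge> 0" using Cf_nn Aint_nn by simp
  thus ?thesis using r Cf_nn by (simp add: Lc_def)
qed

lemma F_lip:
  assumes c1: "continuous_on {0..} \<phi>" and c2: "continuous_on {0..} \<psi>" and s: "s \<ge> 0"
    and d: "\<And>u. u \<in> {0..s} \<Longrightarrow> \<bar>\<phi> u - \<psi> u\<bar> \<le> B"
  shows "\<bar>Fn c (xe \<phi>) s - Fn c (xe \<psi>) s\<bar> \<le> Lc * B"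
proof -
  have B: "B \<ge> 0" using d[of 0] s by auto
  have g1: "G (xe \<phi>) s - G (xe \<psi>) s \<le> Aint * B"
    using d by (intro G_diff[OF c1 c2 s B]) (auto simp: abs_le_iff)
  have g2: "G (xe \<psi>) s - G (xe \<phi>) s \<le> Aint * B"
    using d by (intro G_diff[OF c2 c1 s B]) (auto simp: abs_le_iff)
  have gd: "\<bar>G (xe \<phi>) s - G (xe \<psi>) s\<bar> \<le> Aint * B" using g1 g2 by linarith
  have xd: "\<bar>xe \<phi> s - xe \<psi> s\<bar> \<le> B" using d[of s] s by (simp add: xe_nonneg)
  have "\<bar>Fn c (xe \<phi>) s - Fn c (xe \<psi>) s\<bar>
      = \<bar>r * (xe \<phi> s - xe \<psi> s) + (f0 (xe \<phi> s) (G (xe \<phi>) s) - f0 (xe \<psi> s) (G (xe \<psi>) s))\<bar>"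
    unfolding Fn_def by (simp add: algebra_simps)
  also have "\<dots> \<le> r * \<bar>xe \<phi> s - xe \<psi> s\<bar> + \<bar>f0 (xe \<phi> s) (G (xe \<phi>) s) - f0 (xe \<psi> s) (G (xe \<psi>) s)\<bar>"
    using r by (metis abs_mult abs_of_pos abs_triangle_ineq)
  also have "\<dots> \<le> r * B + Cf * (B + Aint * B)"
    using f0_lip2[of "xe \<phi> s" "G (xe \<phi>) s" "xe \<psi> s" "G (xe \<psi>) s"] xd gd r Cf_nn
    by (smt (verit, ccfv_SIG) mult_left_mono)
  also have "\<dots> = Lc * B" by (simp add: Lc_def algebra_simps)
  finally show ?thesis .
qed

lemma F_int:
  assumes c1: "continuous_on {0..} \<phi>" and N: "N \<ge> 0" and ci: "set_integrable lborel {0..N} c"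
  shows "set_integrable lborel {0..N} (Fn c (xe \<phi>))"
proof -
  obtain B where B: "\<And>u. u \<in> {0..N} \<Longrightarrow> \<bar>\<phi> u\<bar> \<le> B" using cont_bound[OF c1] by blast
  define h where "h s = r * xe \<phi> s + f0 (xe \<phi> s) (G (xe \<phi>) s)" for s
  define C where "C = r * B + \<bar>f0 0 0\<bar> + Cf * (B + Amax * (N1 + T * B))"
  have hm: "h \<in> borel_measurable borel"
  proof -
    have "(\<lambda>s. f0 (fst (xe \<phi> s, G (xe \<phi>) s)) (snd (xe \<phi> s, G (xe \<phi>) s))) \<in> borel_measurable borel"
      using c1 by measurable
    thus ?thesis unfolding h_def[abs_def] using c1 by simp measurable
  qed
  have "set_integrable lborel {0..N} h"
  proof (rule set_integrable_bound[OF const_set_int[of 0 N C]])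
    show "set_borel_measurable lborel {0..N} h" unfolding set_borel_measurable_def using hm by simp
    show "AE x\<in>{0..N} in lborel. norm (h x) \<le> norm C"
    proof (intro AE_I2 impI)
      fix s assume s: "s \<in> {0..N}"
      have xs: "\<bar>xe \<phi> s\<bar> \<le> B" using B s by (simp add: xe_nonneg)
      have gs: "\<bar>G (xe \<phi>) s\<bar> \<le> Amax * (N1 + T * B)"
        using s B by (intro G_int(2)[OF c1]) auto
      have "\<bar>f0 (xe \<phi> s) (G (xe \<phi>) s)\<bar> \<le> \<bar>f0 0 0\<bar> + Cf * (B + Amax * (N1 + T * B))"
        using f0_lip2[of "xe \<phi> s" "G (xe \<phi>) s" 0 0] xs gs Cf_nn
        by (smt (verit, ccfv_SIG) mult_left_mono)
      moreover have "\<bar>r * xe \<phi> s\<bar> \<le> r * B" using xs r by (simp add: abs_mult)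
      ultimately have "\<bar>h s\<bar> \<le> C" unfolding h_def C_def by linarith
      thus "norm (h s) \<le> norm C" by simp
    qed
  qed
  hence "set_integrable lborel {0..N} (\<lambda>s. h s - c s)" by (rule set_integral_diff(1)[OF _ ci])
  thus ?thesis unfolding h_def Fn_def[abs_def] .
qed

lemma F_HK:
  assumes c1: "continuous_on {0..} \<phi>" and t: "0 \<le> t" "t \<le> N" and ci: "set_integrable lborel {0..N} c"
  shows "Fn c (xe \<phi>) integrable_on {0..t}"
    and "(LINT s:{0..t}|lborel. Fn c (xe \<phi>) s) = integral {0..t} (Fn c (xe \<phi>))"
    and "set_integrable lborel {0..t} (Fn c (xe \<phi>))"
proof -
  have "set_integrable lborel {0..N} (Fn c (xe \<phi>))" using t by (intro F_int[OF c1 _ ci]) auto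
  thus si: "set_integrable lborel {0..t} (Fn c (xe \<phi>))" by (rule set_integrable_subset) (use t in auto)
  show "Fn c (xe \<phi>) integrable_on {0..t}" by (rule set_borel_integral_eq_integral(1)[OF si])
  show "(LINT s:{0..t}|lborel. Fn c (xe \<phi>) s) = integral {0..t} (Fn c (xe \<phi>))"
    by (rule set_borel_integral_eq_integral(2)[OF si])
qed

lemma poly_has_integral:
  assumes "t \<ge> (0::real)"
  shows "((\<lambda>s. C * s^k) has_integral C * t^(Suc k) / Suc k) {0..t}"
proof -
  have "((\<lambda>s. C * s^k) has_integral ((\<lambda>s. C * s^(Suc k) / Suc k) t - (\<lambda>s. C * s^(Suc k) / Suc k) 0)) {0..t}"
  proof (rule fundamental_theorem_of_calculus[OF assms])
    fix x :: real
    have "((\<lambda>s. C * s^(Suc k) / Suc k) has_real_derivative C * (Suc k * x^k) / Suc k) (at x within {0..t})"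
      by (intro derivative_eq_intros) auto
    thus "((\<lambda>s. C * s^(Suc k) / Suc k) has_vector_derivative C * x^k) (at x within {0..t})"
      by (simp add: has_real_derivative_iff_has_vector_derivative[symmetric])
  qed
  thus ?thesis by simp
qed

lemma step_est:
  assumes c1: "continuous_on {0..} \<phi>" and c2: "continuous_on {0..} \<psi>"
    and t: "0 \<le> t" "t \<le> N" and ci: "set_integrable lborel {0..N} c" and D: "D \<ge> 0"
    and d: "\<And>u. u \<in> {0..t} \<Longrightarrow> \<bar>\<phi> u - \<psi> u\<bar> \<le> D * (Lc * u)^k / fact k"
  shows "\<bar>integral {0..t} (Fn c (xe \<phi>)) - integral {0..t} (Fn c (xe \<psi>))\<bar> \<le> D * (Lc * t)^(Suc k) / fact (Suc k)"
proof -
  note i1 = F_HK(1)[OF c1 t ci] and i2 = F_HK(1)[OF c2 t ci]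
  define C where "C = Lc * D * Lc^k / fact k"
  have pi: "((\<lambda>s. C * s^k) has_integral C * t^(Suc k) / Suc k) {0..t}" by (rule poly_has_integral[OF t(1)])
  have "\<bar>integral {0..t} (Fn c (xe \<phi>)) - integral {0..t} (Fn c (xe \<psi>))\<bar>
      = norm (integral {0..t} (\<lambda>s. Fn c (xe \<phi>) s - Fn c (xe \<psi>) s))"
    by (simp add: integral_diff[OF i1 i2])
  also have "\<dots> \<le> integral {0..t} (\<lambda>s. C * s^k)"
  proof (rule integral_norm_bound_integral)
    show "(\<lambda>s. Fn c (xe \<phi>) s - Fn c (xe \<psi>) s) integrable_on {0..t}" by (rule integrable_diff[OF i1 i2])
    show "(\<lambda>s. C * s^k) integrable_on {0..t}" using pi by blast
    fix s assume s: "s \<in> {0..t}"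
    have "\<bar>Fn c (xe \<phi>) s - Fn c (xe \<psi>) s\<bar> \<le> Lc * (D * (Lc * s)^k / fact k)"
    proof (rule F_lip[OF c1 c2])
      show "0 \<le> s" using s by simp
      fix u assume u: "u \<in> {0..s}"
      have "\<bar>\<phi> u - \<psi> u\<bar> \<le> D * (Lc * u)^k / fact k" using d u s by auto
      also have "\<dots> \<le> D * (Lc * s)^k / fact k"
        using u Lc_pos D by (intro divide_right_mono mult_left_mono power_mono) auto
      finally show "\<bar>\<phi> u - \<psi> u\<bar> \<le> D * (Lc * s)^k / fact k" .
    qed
    also have "\<dots> = C * s^k" by (simp add: C_def power_mult_distrib)
    finally show "norm (Fn c (xe \<phi>) s - Fn c (xe \<psi>) s) \<le> C * s^k" by simp
  qed
  also have "\<dots> = C * t^(Suc k) / Suc k" using pi by (rule integral_unique)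
  also have "\<dots> = D * (Lc * t)^(Suc k) / fact (Suc k)"
    by (simp add: C_def power_mult_distrib field_simps)
  finally show ?thesis .
qed

lemma exp_term_lim: "(\<lambda>k. D * x^k / fact k) \<longlonglongrightarrow> (0::real)"
proof -
  have "(\<lambda>k. inverse (fact k) * x^k) \<longlonglongrightarrow> (0::real)" by (rule summable_LIMSEQ_zero[OF summable_exp])
  hence "(\<lambda>k. D * (inverse (fact k) * x^k)) \<longlonglongrightarrow> D * 0" by (intro tendsto_mult tendsto_const)
  thus ?thesis by (simp add: field_simps)
qed

lemma partial_unique:
  assumes c1: "continuous_on {0..} \<phi>" and c2: "continuous_on {0..} \<psi>"
    and N: "N \<ge> 0" and ci: "set_integrable lborel {0..N} c"
    and e1: "\<And>t. t \<in> {0..N} \<Longrightarrow> \<phi> t = \<eta>0 + integral {0..t} (Fn c (xe \<phi>))"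
    and e2: "\<And>t. t \<in> {0..N} \<Longrightarrow> \<psi> t = \<eta>0 + integral {0..t} (Fn c (xe \<psi>))"
    and t: "t \<in> {0..N}"
  shows "\<phi> t = \<psi> t"
proof -
  have c3: "continuous_on {0..} (\<lambda>u. \<phi> u - \<psi> u)" by (intro continuous_intros c1 c2)
  obtain M where M: "\<And>u. u \<in> {0..N} \<Longrightarrow> \<bar>\<phi> u - \<psi> u\<bar> \<le> M" using cont_bound[OF c3] by blast
  have M0: "M \<ge> 0" using M[of 0] N by auto
  have ind: "\<forall>u\<in>{0..N}. \<bar>\<phi> u - \<psi> u\<bar> \<le> M * (Lc * u)^k / fact k" for k
  proof (induction k)
    case 0 thus ?case using M by simp
  next
    case (Suc k)
    show ?case
    proof
      fix u assume u: "u \<in> {0..N}"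
      have "\<bar>\<phi> u - \<psi> u\<bar> = \<bar>integral {0..u} (Fn c (xe \<phi>)) - integral {0..u} (Fn c (xe \<psi>))\<bar>"
        using e1[OF u] e2[OF u] by simp
      also have "\<dots> \<le> M * (Lc * u)^(Suc k) / fact (Suc k)"
        by (rule step_est[OF c1 c2 _ _ ci M0]) (use u Suc in auto)
      finally show "\<bar>\<phi> u - \<psi> u\<bar> \<le> M * (Lc * u)^(Suc k) / fact (Suc k)" .
    qed
  qed
  have "\<bar>\<phi> t - \<psi> t\<bar> \<le> 0"
    by (rule LIMSEQ_le_const[OF exp_term_lim[of M "Lc * t"]]) (use ind t in auto)
  thus ?thesis by simp
qed

definition clamp :: "real \<Rightarrow> real \<Rightarrow> real" where "clamp N t = max 0 (min N t)"

lemma clamp_id: "t \<in> {0..N} \<Longrightarrow> clamp N t = t" by (auto simp: clamp_def)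
lemma clamp_in: "N \<ge> 0 \<Longrightarrow> clamp N t \<in> {0..N}" by (auto simp: clamp_def)

definition PhiF :: "real \<Rightarrow> real \<Rightarrow> (real \<Rightarrow> real) \<Rightarrow> (real \<Rightarrow>\<^sub>C real) \<Rightarrow> real \<Rightarrow> real" where
  "PhiF \<eta>0 N c \<phi> = (\<lambda>t. \<eta>0 + integral {0..clamp N t} (Fn c (xe (apply_bcontfun \<phi>))))"

definition Phi where "Phi \<eta>0 N c \<phi> = Bcontfun (PhiF \<eta>0 N c \<phi>)"

lemma PhiF_bcontfun:
  assumes N: "N \<ge> 0" and ci: "set_integrable lborel {0..N} c"
  shows "PhiF \<eta>0 N c \<phi> \<in> bcontfun"
proof -
  define I where "I t = integral {0..t} (Fn c (xe (apply_bcontfun \<phi>)))" for t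
  have cI: "continuous_on {0..N} I"
    unfolding I_def by (rule indefinite_integral_continuous_1[OF F_HK(1)[OF _ N order_refl ci]]) simp
  have ccl: "continuous_on UNIV (clamp N)" unfolding clamp_def[abs_def] by (intro continuous_intros)
  have c: "continuous_on UNIV (\<lambda>t. I (clamp N t))"
    by (rule continuous_on_compose2[OF cI ccl]) (use clamp_in[OF N] in auto)
  have "bounded (I ` {0..N})" by (intro compact_imp_bounded compact_continuous_image cI) auto
  then obtain M where M: "\<forall>x\<in>I ` {0..N}. norm x \<le> M" by (auto simp: bounded_iff)
  show ?thesis
  proof (rule bcontfun_normI)
    show "continuous_on UNIV (PhiF \<eta>0 N c \<phi>)" unfolding PhiF_def I_def[symmetric]
      by (intro continuous_intros c)
    fix t
    have "norm (I (clamp N t)) \<le> M" using M clamp_in[OF N] by auto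
    thus "norm (PhiF \<eta>0 N c \<phi> t) \<le> \<bar>\<eta>0\<bar> + M" unfolding PhiF_def I_def[symmetric]
      by (simp add: abs_triangle_ineq order_trans[OF abs_triangle_ineq])
  qed
qed

lemma Phi_apply:
  assumes N: "N \<ge> 0" and ci: "set_integrable lborel {0..N} c"
  shows "apply_bcontfun (Phi \<eta>0 N c \<phi>) t = \<eta>0 + integral {0..clamp N t} (Fn c (xe (apply_bcontfun \<phi>)))"
  unfolding Phi_def using Bcontfun_inverse[OF PhiF_bcontfun[OF N ci]] by (simp add: PhiF_def)

lemma iter_est:
  assumes N: "N \<ge> 0" and ci: "set_integrable lborel {0..N} c"
  shows "\<forall>t\<in>{0..N}. \<bar>((Phi \<eta>0 N c)^^k) \<phi> t - ((Phi \<eta>0 N c)^^k) \<psi> t\<bar> \<le> dist \<phi> \<psi> * (Lc * t)^k / fact k"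
proof (induction k)
  case 0
  show ?case using dist_bounded[of \<phi> _ \<psi>] by (simp add: dist_real_def)
next
  case (Suc k)
  show ?case
  proof
    fix t assume t: "t \<in> {0..N}"
    have "\<bar>((Phi \<eta>0 N c)^^Suc k) \<phi> t - ((Phi \<eta>0 N c)^^Suc k) \<psi> t\<bar>
       = \<bar>integral {0..t} (Fn c (xe (((Phi \<eta>0 N c)^^k) \<phi>))) - integral {0..t} (Fn c (xe (((Phi \<eta>0 N c)^^k) \<psi>)))\<bar>"
      using t by (simp add: Phi_apply[OF N ci] clamp_id)
    also have "\<dots> \<le> dist \<phi> \<psi> * (Lc * t)^(Suc k) / fact (Suc k)"
      by (rule step_est[OF _ _ _ _ ci]) (use t Suc in auto)
    finally show "\<bar>((Phi \<eta>0 N c)^^Suc k) \<phi> t - ((Phi \<eta>0 N c)^^Suc k) \<psi> t\<bar> \<le> dist \<phi> \<psi> * (Lc * t)^(Suc k) / fact (Suc k)" .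
  qed
qed

lemma dist_iter:
  assumes N: "N \<ge> 0" and ci: "set_integrable lborel {0..N} c" and k: "k \<ge> 1"
  shows "dist (((Phi \<eta>0 N c)^^k) \<phi>) (((Phi \<eta>0 N c)^^k) \<psi>) \<le> dist \<phi> \<psi> * (Lc * N)^k / fact k"
proof (rule dist_bound)
  fix t
  obtain j where j: "k = Suc j" using k by (cases k) auto
  have cl: "clamp N (clamp N t) = clamp N t" using clamp_id[OF clamp_in[OF N]] .
  have e: "((Phi \<eta>0 N c)^^k) g t = ((Phi \<eta>0 N c)^^k) g (clamp N t)" for g
    unfolding j by (simp add: Phi_apply[OF N ci] cl)
  have "dist (((Phi \<eta>0 N c)^^k) \<phi> t) (((Phi \<eta>0 N c)^^k) \<psi> t)
      = \<bar>((Phi \<eta>0 N c)^^k) \<phi> (clamp N t) - ((Phi \<eta>0 N c)^^k) \<psi> (clamp N t)\<bar>"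
    by (simp add: e[of \<phi>] e[of \<psi>] dist_real_def)
  also have "\<dots> \<le> dist \<phi> \<psi> * (Lc * clamp N t)^k / fact k"
    using iter_est[OF N ci] clamp_in[OF N] by blast
  also have "\<dots> \<le> dist \<phi> \<psi> * (Lc * N)^k / fact k"
    using clamp_in[OF N, of t] Lc_pos
    by (intro divide_right_mono mult_left_mono power_mono) auto
  finally show "dist (((Phi \<eta>0 N c)^^k) \<phi> t) (((Phi \<eta>0 N c)^^k) \<psi> t) \<le> dist \<phi> \<psi> * (Lc * N)^k / fact k" .
qed

lemma exist_partial:
  assumes N: "N \<ge> 0" and ci: "set_integrable lborel {0..N} c"
  shows "\<exists>p::real \<Rightarrow>\<^sub>C real. \<forall>t\<in>{0..N}. p t = \<eta>0 + integral {0..t} (Fn c (xe p))"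
proof -
  let ?P = "Phi \<eta>0 N c"
  have "\<forall>\<^sub>F k in sequentially. 1 * (Lc * N)^k / fact k < (1/2::real)"
    using exp_term_lim[of 1 "Lc * N"] by (rule order_tendstoD) simp
  then obtain n0 where n0: "\<And>k. k \<ge> n0 \<Longrightarrow> (Lc * N)^k / fact k < 1/2"
    unfolding eventually_sequentially by auto
  define k where "k = max 1 n0"
  have k: "k \<ge> 1" "(Lc * N)^k / fact k < 1/2" using n0[of k] by (auto simp: k_def)
  have "\<exists>!p. (?P^^k) p = p"
  proof (rule banach_fix_type[of "1/2"])
    show "\<forall>x y. dist ((?P^^k) x) ((?P^^k) y) \<le> 1/2 * dist x y"
    proof (intro allI)
      fix x y
      have "dist ((?P^^k) x) ((?P^^k) y) \<le> dist x y * ((Lc * N)^k / fact k)"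
        using dist_iter[OF N ci k(1), where \<phi>=x and \<psi>=y] by simp
      also have "\<dots> \<le> dist x y * (1/2)" using k(2) by (intro mult_left_mono) auto
      finally show "dist ((?P^^k) x) ((?P^^k) y) \<le> 1/2 * dist x y" by simp
    qed
  qed auto
  then obtain p where p: "(?P^^k) p = p" and u: "\<And>q. (?P^^k) q = q \<Longrightarrow> q = p" by blast
  have "(?P^^k) (?P p) = ?P p" using p by (metis funpow_swap1)
  hence Pp: "?P p = p" by (rule u)
  show ?thesis
  proof (intro exI ballI)
    fix t assume t: "t \<in> {0..N}"
    have "p t = ?P p t" by (simp add: Pp)
    also have "\<dots> = \<eta>0 + integral {0..t} (Fn c (xe p))" by (simp add: Phi_apply[OF N ci] clamp_id[OF t])
    finally show "p t = \<eta>0 + integral {0..t} (Fn c (xe p))" .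
  qed
qed

lemma state_eq_iff:
  "state_eq T r a f0 (\<eta>0, \<eta>1) c x \<longleftrightarrow>
     (\<forall>t < - T. x t = 0) \<and> (\<forall>t\<in>{-T..<0}. x t = \<eta>1 t) \<and> continuous_on {0..} x \<and>
     (\<forall>t\<ge>0. set_integrable lborel {0..t} (Fn c x) \<and> x t = \<eta>0 + (LINT s:{0..t}|lborel. Fn c x s))"
  unfolding state_eq_def Fn_def[abs_def] G_def by simp

lemma sol_xe: "state_eq T r a f0 (\<eta>0, \<eta>1) c x \<Longrightarrow> xe x = x"
  unfolding state_eq_iff by (auto simp: xe_def fun_eq_iff)

lemma Fn_local:
  assumes "\<And>u. u \<le> s \<Longrightarrow> x u = y u"
  shows "Fn c x s = Fn c y s"
proof -
  have "G x s = G y s" unfolding G_def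
    by (rule set_lebesgue_integral_cong) (use assms in auto)
  thus ?thesis unfolding Fn_def using assms[of s] by simp
qed

lemma sol_partial:
  assumes sol: "state_eq T r a f0 (\<eta>0, \<eta>1) c x" and ci: "set_integrable lborel {0..N} c"
    and t: "t \<in> {0..N}"
  shows "x t = \<eta>0 + integral {0..t} (Fn c (xe x))"
proof -
  have c: "continuous_on {0..} x" using sol unfolding state_eq_iff by simp
  have "x t = \<eta>0 + (LINT s:{0..t}|lborel. Fn c x s)" using sol t unfolding state_eq_iff by simp
  also have "\<dots> = \<eta>0 + integral {0..t} (Fn c (xe x))"
    using F_HK(2)[OF c _ _ ci, of t] t sol_xe[OF sol] by simp
  finally show ?thesis .
qed

lemma sol_unique:
  assumes s1: "state_eq T r a f0 (\<eta>0, \<eta>1) c x" and s2: "state_eq T r a f0 (\<eta>0, \<eta>1) c y"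
    and ci: "\<And>t. t \<ge> 0 \<Longrightarrow> set_integrable lborel {0..t} c"
  shows "x = y"
proof
  fix t
  show "x t = y t"
  proof (cases "t \<ge> 0")
    case True
    have c1: "continuous_on {0..} x" and c2: "continuous_on {0..} y"
      using s1 s2 unfolding state_eq_iff by auto
    have "x t = y t"
      by (rule partial_unique[OF c1 c2 True ci[OF True] sol_partial[OF s1 ci[OF True]] sol_partial[OF s2 ci[OF True]]])
         (use True in auto)
    thus ?thesis .
  next
    case False
    thus ?thesis using s1 s2 unfolding state_eq_iff by (cases "t < -T") auto
  qed
qed

lemma sol_exists:
  assumes ci: "\<And>t. t \<ge> 0 \<Longrightarrow> set_integrable lborel {0..t} c"
  shows "\<exists>x. state_eq T r a f0 (\<eta>0, \<eta>1) c x"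
proof -
  have "\<forall>n::nat. \<exists>p::real \<Rightarrow>\<^sub>C real. \<forall>t\<in>{0..real n}. p t = \<eta>0 + integral {0..t} (Fn c (xe p))"
    using exist_partial ci by auto
  then obtain P :: "nat \<Rightarrow> (real \<Rightarrow>\<^sub>C real)"
    where P: "\<And>n t. t \<in> {0..real n} \<Longrightarrow> P n t = \<eta>0 + integral {0..t} (Fn c (xe (P n)))"
    by metis
  have agree: "P m t = P n t" if "t \<in> {0..real m}" "real m \<le> real n" for m n t
  proof (rule partial_unique[OF _ _ _ ci _ _ that(1)])
    show "\<And>t. t \<in> {0..real m} \<Longrightarrow> P m t = \<eta>0 + integral {0..t} (Fn c (xe (P m)))" by (rule P)
    show "\<And>t. t \<in> {0..real m} \<Longrightarrow> P n t = \<eta>0 + integral {0..t} (Fn c (xe (P n)))"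
      using P that by auto
  qed auto
  define Y where "Y t = P (nat \<lceil>t\<rceil>) t" for t
  have YP: "Y t = P n t" if "t \<in> {0..real n}" for n t
  proof -
    have "t \<le> real (nat \<lceil>t\<rceil>)" using that by linarith
    moreover have "\<lceil>t\<rceil> \<le> int n" using that by (simp add: ceiling_le_iff)
    hence "nat \<lceil>t\<rceil> \<le> n" by (simp add: nat_le_iff)
    hence "real (nat \<lceil>t\<rceil>) \<le> real n" by simp
    ultimately show ?thesis unfolding Y_def using agree that by auto
  qed
  define X where "X = xe Y"
  have XP: "X u = xe (P n) u" if "u \<le> real n" for u n
    using that YP[of u n] by (auto simp: X_def xe_def)
  have contY: "continuous_on {0..} Y"
    unfolding continuous_on_eq_continuous_within
  proof
    fix t :: real assume t: "t \<in> {0..}"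
    define n where "n = nat \<lceil>t\<rceil> + 1"
    have tn: "t < real n" unfolding n_def by linarith
    have "continuous_on {0..real n} Y"
      using continuous_on_cong[of "{0..real n}" "{0..real n}" Y "P n"] YP[of _ n] by auto
    hence "continuous (at t within {0..real n}) Y" using t tn by (auto simp: continuous_on_eq_continuous_within)
    moreover have "at t within {0..real n} = at t within {0..}"
      by (rule at_within_nhd[of _ "{..<real n}"]) (use tn in auto)
    ultimately show "continuous (at t within {0..}) Y" by simp
  qed
  have "state_eq T r a f0 (\<eta>0, \<eta>1) c X"
    unfolding state_eq_iff
  proof (intro conjI allI impI ballI)
    show "continuous_on {0..} X"
      using continuous_on_cong[of "{0..}" "{0..}" X Y] contY by (auto simp: X_def xe_nonneg)
    fix t :: real
    show "t < -T \<Longrightarrow> X t = 0" by (simp add: X_def xe_def)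
    show "t \<in> {-T..<0} \<Longrightarrow> X t = \<eta>1 t" by (auto simp: X_def xe_def)
    assume t: "t \<ge> 0"
    define n where "n = nat \<lceil>t\<rceil>"
    have tn: "t \<le> real n" unfolding n_def by linarith
    have FX: "Fn c X s = Fn c (xe (P n)) s" if "s \<le> real n" for s
      by (rule Fn_local) (use XP that in auto)
    have si: "set_integrable lborel {0..t} (Fn c (xe (P n)))"
      by (rule F_HK(3)[OF _ t tn ci]) (use tn in auto)
    show "set_integrable lborel {0..t} (Fn c X)"
      using si set_integrable_cong[of lborel lborel "{0..t}" "{0..t}" "Fn c X" "Fn c (xe (P n))"] FX tn
      by auto
    have "X t = P n t" using XP[OF tn] t by (simp add: xe_nonneg)
    also have "\<dots> = \<eta>0 + integral {0..t} (Fn c (xe (P n)))" using P[of t n] t tn by auto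
    also have "integral {0..t} (Fn c (xe (P n))) = (LINT s:{0..t}|lborel. Fn c (xe (P n)) s)"
      by (rule F_HK(2)[OF _ t tn ci, symmetric]) (use tn in auto)
    also have "\<dots> = (LINT s:{0..t}|lborel. Fn c X s)"
      by (rule set_lebesgue_integral_cong) (use FX tn in auto)
    finally show "X t = \<eta>0 + (LINT s:{0..t}|lborel. Fn c X s)" .
  qed
  thus ?thesis by blast
qed

lemma state_sol:
  assumes ci: "\<And>t. t \<ge> 0 \<Longrightarrow> set_integrable lborel {0..t} c"
  shows "state_eq T r a f0 (\<eta>0, \<eta>1) c (state T r a f0 (\<eta>0, \<eta>1) c)"
proof -
  obtain x where x: "state_eq T r a f0 (\<eta>0, \<eta>1) c x" using sol_exists[OF ci] by blast
  have "\<exists>!x. state_eq T r a f0 (\<eta>0, \<eta>1) c x"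
    using x sol_unique[OF _ _ ci] by blast
  thus ?thesis unfolding state_def by (rule theI')
qed

lemma sol_diff:
  assumes sol: "state_eq T r a f0 (\<eta>0, \<eta>1) c x" and ci: "set_integrable lborel {0..t} c"
    and ut: "0 \<le> u" "u \<le> t"
  shows "Fn c x integrable_on {u..t}" and "x t - x u = integral {u..t} (Fn c x)"
proof -
  have c: "continuous_on {0..} x" using sol unfolding state_eq_iff by simp
  have xe: "xe x = x" by (rule sol_xe[OF sol])
  have i: "Fn c x integrable_on {0..t}" using F_HK(1)[OF c _ order_refl ci] ut xe by simp
  show "Fn c x integrable_on {u..t}" by (rule integrable_on_subinterval[OF i]) (use ut in auto)
  have "x t = \<eta>0 + integral {0..t} (Fn c x)" using sol_partial[OF sol ci, of t] ut xe by simp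
  moreover have "x u = \<eta>0 + integral {0..u} (Fn c x)" using sol_partial[OF sol ci, of u] ut xe by simp
  moreover have "integral {0..u} (Fn c x) + integral {u..t} (Fn c x) = integral {0..t} (Fn c x)"
    by (rule Henstock_Kurzweil_Integration.integral_combine[OF ut i])
  ultimately show "x t - x u = integral {u..t} (Fn c x)" by simp
qed

lemma sol_zero:
  assumes sol: "state_eq T r a f0 (\<eta>0, \<eta>1) c x" and ci: "set_integrable lborel {0..0} c"
  shows "x 0 = \<eta>0"
  using sol_partial[OF sol ci, of 0] by simp

lemma integral_lower:
  fixes f :: "real \<Rightarrow> real"
  assumes "f integrable_on {u..t}" "u \<le> t" "\<And>s. s \<in> {u..t} \<Longrightarrow> f s \<ge> C"
  shows "integral {u..t} f \<ge> (t - u) * C"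
proof -
  have "integral {u..t} (\<lambda>s. C) \<le> integral {u..t} f"
    by (rule integral_le[OF integrable_const_ivl assms(1)]) (use assms in auto)
  thus ?thesis using assms(2) by simp
qed

lemma ftc_real:
  assumes "\<And>s. (g has_real_derivative g' s) (at s)" "u \<le> t"
  shows "(g' has_integral g t - g u) {u..t}"
  by (rule fundamental_theorem_of_calculus[OF assms(2)])
     (use assms(1) in \<open>auto simp: has_real_derivative_iff_has_vector_derivative[symmetric] intro: has_field_derivative_at_within\<close>)

lemma AE_shift:
  assumes ae: "AE \<xi> in lborel. \<xi> \<in> {-T..0} \<longrightarrow> 0 \<le> \<eta>1 \<xi>"
  shows "AE \<xi> in lborel. 0 \<le> indicator {-T..0} (s + \<xi>) * \<eta>1 (s + \<xi>)"
proof -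
  have "AE \<xi> in lborel. 0 \<le> indicator {-T..0} \<xi> * \<eta>1 \<xi>"
    using ae by eventually_elim (auto simp: indicator_def)
  hence "AE \<xi> in distr lborel borel ((+) s). 0 \<le> indicator {-T..0} \<xi> * \<eta>1 \<xi>"
    by (simp only: lborel_distr_plus)
  thus ?thesis by (subst (asm) AE_distr_iff) auto
qed

lemma G_nonneg_AE:
  assumes "AE \<xi> in lborel. \<xi> \<in> {-T..0} \<longrightarrow> 0 \<le> x (s + \<xi>)"
  shows "G x s \<ge> 0"
proof -
  have "AE \<xi> in lborel. 0 \<le> indicator {-T..0} \<xi> *\<^sub>R (a \<xi> * x (s + \<xi>))"
    using assms by eventually_elim (use a_nonneg in \<open>auto simp: indicator_def\<close>)
  thus ?thesis unfolding G_def set_lebesgue_integral_def by (rule integral_nonneg_AE)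
qed

lemma F_lower:
  assumes xs: "x s \<ge> 0" and g: "G x s \<ge> 0" and c: "c s \<le> 0"
  shows "Fn c x s \<ge> (r - Cf) * x s"
proof -
  have "f0 (x s) (G x s) \<ge> f0 (x s) 0" by (rule f0_mono2[OF g])
  moreover have "f0 (x s) 0 \<ge> f0 0 0 - Cf * x s" using f0_lip2[of "x s" 0 0 0] xs by (simp add: abs_le_iff)
  ultimately show ?thesis using f00 c unfolding Fn_def by (simp add: algebra_simps)
qed

lemma pos_Hpp:
  assumes e0: "\<eta>0 > 0" and ae: "AE \<xi> in lborel. \<xi> \<in> {-T..0} \<longrightarrow> 0 \<le> \<eta>1 \<xi>"
    and t: "t \<ge> 0"
  shows "state T r a f0 (\<eta>0, \<eta>1) (\<lambda>_. 0) t > 0"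
proof -
  let ?x = "state T r a f0 (\<eta>0, \<eta>1) (\<lambda>_. 0)"
  have ci: "\<And>t. set_integrable lborel {0..t} (\<lambda>_. 0::real)" by (simp add: set_integrable_def)
  have sol: "state_eq T r a f0 (\<eta>0, \<eta>1) (\<lambda>_. 0) ?x" by (rule state_sol[OF ci])
  show ?thesis
  proof (rule crossing[where st=0 and K=Cf and v="?x"])
    show "continuous_on {0..} ?x" using sol unfolding state_eq_iff by simp
    show "?x 0 > 0" using sol_zero[OF sol ci] e0 by simp
    show "Cf \<ge> 0" by (rule Cf_nn)
    fix u t' B assume u: "0 \<le> u" "u \<le> t'" and nn: "\<And>\<tau>. \<tau> \<in> {0..t'} \<Longrightarrow> 0 \<le> ?x \<tau>"
      and bB: "\<And>\<tau>. \<tau> \<in> {u..t'} \<Longrightarrow> ?x \<tau> \<le> B"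
    note d = sol_diff[OF sol ci u]
    have "integral {u..t'} (Fn (\<lambda>_. 0) ?x) \<ge> (t' - u) * (- Cf * B)"
    proof (rule integral_lower[OF d(1) u(2)])
      fix s assume s: "s \<in> {u..t'}"
      have xs: "?x s \<ge> 0" using nn s u by auto
      have g: "G ?x s \<ge> 0"
      proof (rule G_nonneg_AE)
        show "AE \<xi> in lborel. \<xi> \<in> {-T..0} \<longrightarrow> 0 \<le> ?x (s + \<xi>)"
          using AE_shift[OF ae, of s]
        proof eventually_elim
          case (elim \<xi>)
          show ?case
          proof
            assume \<xi>: "\<xi> \<in> {-T..0}"
            show "0 \<le> ?x (s + \<xi>)"
            proof (cases "s + \<xi> < 0")
              case True
              have "?x (s + \<xi>) = \<eta>1 (s + \<xi>)" using sol True \<xi> s u unfolding state_eq_iff by auto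
              thus ?thesis using elim True \<xi> s u by (auto simp: indicator_def)
            next
              case False thus ?thesis using nn \<xi> s by auto
            qed
          qed
        qed
      qed
      have "Fn (\<lambda>_. 0) ?x s \<ge> (r - Cf) * ?x s" by (rule F_lower[OF xs g]) simp
      moreover have "(r - Cf) * ?x s \<ge> - Cf * ?x s" using r xs by (simp add: algebra_simps)
      moreover have "- Cf * ?x s \<ge> - Cf * B" using bB s Cf_nn by (simp add: mult_left_mono)
      ultimately show "Fn (\<lambda>_. 0) ?x s \<ge> - Cf * B" by linarith
    qed
    thus "?x t' - ?x u \<ge> - Cf * (t' - u) * B" using d(2) by (simp add: algebra_simps)
  qed (rule t)
qed


end



context dde begin
lemma f0_lower: "f0 xa ya \<ge> f0 xb yb - Cf * (\<bar>xa - xb\<bar> + \<bar>ya - yb\<bar>)"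
  using f0_lip2[of xa ya xb yb] by (simp add: abs_le_iff)

lemma lower_adm0:
  assumes pos: "\<And>t. t \<ge> 0 \<Longrightarrow> state T r a f0 (\<eta>0, \<eta>1) (\<lambda>_. 0) t > 0"
  shows "\<exists>t0 m. m > 0 \<and> (\<forall>t\<in>{0..t0}. state T r a f0 (\<eta>0, \<eta>1) (\<lambda>_. 0) t \<ge> m)
           \<and> (\<forall>t\<ge>t0. state T r a f0 (\<eta>0, \<eta>1) (\<lambda>_. 0) t \<ge> exp (- Cf * t))"
proof -
  let ?x = "state T r a f0 (\<eta>0, \<eta>1) (\<lambda>_. 0)"
  have ci: "\<And>t. set_integrable lborel {0..t} (\<lambda>_. 0::real)" by (simp add: set_integrable_def)
  have sol: "state_eq T r a f0 (\<eta>0, \<eta>1) (\<lambda>_. 0) ?x" by (rule state_sol[OF ci])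
  have cx: "continuous_on {0..} ?x" using sol unfolding state_eq_iff by simp
  define \<beta> where "\<beta> = ?x T / 2"
  have \<beta>: "\<beta> > 0" using pos[of T] T by (simp add: \<beta>_def)
  define K' where "K' = Cf - r/2"
  define e where "e t = exp (- K' * (t - T))" for t
  have ve: "?x t - \<beta> * e t > 0" if t: "t \<ge> T" for t
  proof (rule crossing[where st=T and K=Cf and v="\<lambda>t. ?x t - \<beta> * e t"])
    show "continuous_on {T..} (\<lambda>t. ?x t - \<beta> * e t)" unfolding e_def
      by (intro continuous_intros continuous_on_subset[OF cx]) (use T in auto)
    show "?x T - \<beta> * e T > 0" using \<beta> by (simp add: e_def \<beta>_def)
    show "Cf \<ge> 0" by (rule Cf_nn)
    show "T \<le> t" by (rule t)
    fix u t' B assume u: "T \<le> u" "u \<le> t'" and nn: "\<And>\<tau>. \<tau> \<in> {T..t'} \<Longrightarrow> 0 \<le> ?x \<tau> - \<beta> * e \<tau>"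
      and bB: "\<And>\<tau>. \<tau> \<in> {u..t'} \<Longrightarrow> ?x \<tau> - \<beta> * e \<tau> \<le> B"
    have u0: "0 \<le> u" using u T by simp
    note d = sol_diff[OF sol ci u0 u(2)]
    have der: "((\<lambda>s. - (\<beta> * e s)) has_real_derivative \<beta> * K' * e s) (at s)" for s
      unfolding e_def by (auto intro!: derivative_eq_intros simp: algebra_simps)
    have hi: "((\<lambda>s. \<beta> * K' * e s) has_integral (- (\<beta> * e t')) - (- (\<beta> * e u))) {u..t'}"
      by (rule ftc_real[OF der u(2)])
    have eq: "(?x t' - \<beta> * e t') - (?x u - \<beta> * e u) = integral {u..t'} (\<lambda>s. Fn (\<lambda>_. 0) ?x s + \<beta> * K' * e s)"
    proof -
      have e1: "integral {u..t'} (\<lambda>s. Fn (\<lambda>_. 0) ?x s + \<beta> * K' * e s)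
          = integral {u..t'} (Fn (\<lambda>_. 0) ?x) + integral {u..t'} (\<lambda>s. \<beta> * K' * e s)"
        by (rule integral_add[OF d(1) has_integral_integrable[OF hi]])
      have e3: "integral {u..t'} (\<lambda>s. \<beta> * K' * e s) = (- (\<beta> * e t')) - (- (\<beta> * e u))"
        by (rule integral_unique[OF hi])
      show ?thesis using e1 e3 d(2) by linarith
    qed
    have "integral {u..t'} (\<lambda>s. Fn (\<lambda>_. 0) ?x s + \<beta> * K' * e s) \<ge> (t' - u) * (- Cf * B)"
    proof (rule integral_lower[OF integrable_add[OF d(1) has_integral_integrable[OF hi]] u(2)])
      fix s assume s: "s \<in> {u..t'}"
      have s0: "s \<ge> T" using s u by auto
      have xs: "?x s > 0" using pos s0 T by simp
      have g: "G ?x s \<ge> 0"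
        by (rule G_nonneg_AE, rule AE_I2) (use pos s0 in \<open>auto intro: less_imp_le\<close>)
      have F: "Fn (\<lambda>_. 0) ?x s \<ge> (r - Cf) * ?x s" by (rule F_lower) (use xs g in auto)
      have es: "e s > 0" by (simp add: e_def)
      have vs: "?x s - \<beta> * e s \<ge> 0" using nn s u by auto
      have "(r - Cf) * ?x s + \<beta> * K' * e s = (r - Cf) * (?x s - \<beta> * e s) + (r/2) * (\<beta> * e s)"
        by (simp add: K'_def algebra_simps)
      also have "\<dots> \<ge> (r - Cf) * (?x s - \<beta> * e s)" using r \<beta> es by simp
      also have "(r - Cf) * (?x s - \<beta> * e s) \<ge> - Cf * (?x s - \<beta> * e s)" using r vs by (simp add: algebra_simps)
      also have "- Cf * (?x s - \<beta> * e s) \<ge> - Cf * B" using bB[OF s] Cf_nn by (simp add: mult_left_mono)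
      finally show "Fn (\<lambda>_. 0) ?x s + \<beta> * K' * e s \<ge> - Cf * B" using F by linarith
    qed
    thus "(?x t' - \<beta> * e t') - (?x u - \<beta> * e u) \<ge> - Cf * (t' - u) * B"
      unfolding eq by (simp add: algebra_simps)
  qed
  define t0 where "t0 = max T (- (ln \<beta> + K' * T) / (r/2))"
  have big: "?x t \<ge> exp (- Cf * t)" if t: "t \<ge> t0" for t
  proof -
    have tT: "t \<ge> T" using t by (simp add: t0_def)
    have "- (ln \<beta> + K' * T) / (r/2) \<le> t" using t by (simp add: t0_def)
    hence "- (ln \<beta> + K' * T) \<le> (r/2) * t" using r by (simp add: field_simps)
    moreover have "ln \<beta> + (- K' * (t - T)) = (ln \<beta> + K' * T) + (r/2)*t - Cf * t"
      by (simp add: K'_def field_simps)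
    ultimately have "- Cf * t \<le> ln \<beta> + (- K' * (t - T))" by linarith
    hence "exp (- Cf * t) \<le> exp (ln \<beta> + (- K' * (t - T)))" by simp
    also have "\<dots> = \<beta> * e t" by (simp only: exp_add exp_ln[OF \<beta>]) (simp add: e_def)
    finally show ?thesis using ve[OF tT] by simp
  qed
  have "\<exists>p\<in>{0..t0}. \<forall>y\<in>{0..t0}. ?x p \<le> ?x y"
    by (rule continuous_attains_inf) (use T in \<open>auto simp: t0_def intro: continuous_on_subset[OF cx]\<close>)
  then obtain p where p: "p \<in> {0..t0}" "\<And>y. y \<in> {0..t0} \<Longrightarrow> ?x p \<le> ?x y" by blast
  have "?x p > 0" using pos p by auto
  thus ?thesis using p big by blast
qed

lemma comparison:
  assumes cpos: "\<And>t. t \<ge> 0 \<Longrightarrow> 0 \<le> c t" and ci: "\<And>t. t \<ge> 0 \<Longrightarrow> set_integrable lborel {0..t} c"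
    and t: "t \<ge> 0"
  shows "state T r a f0 (\<eta>0, \<eta>1) c t \<le> state T r a f0 (\<eta>0, \<eta>1) (\<lambda>_. 0) t"
proof (rule ccontr)
  let ?x = "state T r a f0 (\<eta>0, \<eta>1) (\<lambda>_. 0)" and ?y = "state T r a f0 (\<eta>0, \<eta>1) c"
  assume contra: "\<not> ?y t \<le> ?x t"
  have ci0: "\<And>t. set_integrable lborel {0..t} (\<lambda>_. 0::real)" by (simp add: set_integrable_def)
  have solx: "state_eq T r a f0 (\<eta>0, \<eta>1) (\<lambda>_. 0) ?x" by (rule state_sol[OF ci0])
  have soly: "state_eq T r a f0 (\<eta>0, \<eta>1) c ?y" by (rule state_sol[OF ci])
  have cx: "continuous_on {0..} ?x" using solx unfolding state_eq_iff by simp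
  have cy: "continuous_on {0..} ?y" using soly unfolding state_eq_iff by simp
  have xex: "xe ?x = ?x" by (rule sol_xe[OF solx])
  have xey: "xe ?y = ?y" by (rule sol_xe[OF soly])
  define \<epsilon> where "\<epsilon> = (?y t - ?x t) / (2 * exp (Lc * t))"
  have \<epsilon>: "\<epsilon> > 0" using contra by (simp add: \<epsilon>_def)
  have vpos: "?x t - ?y t + \<epsilon> * exp (Lc * t) > 0"
  proof (rule crossing[where st=0 and K="r + Cf" and v="\<lambda>t. ?x t - ?y t + \<epsilon> * exp (Lc * t)"])
    show "continuous_on {0..} (\<lambda>t. ?x t - ?y t + \<epsilon> * exp (Lc * t))"
      by (intro continuous_intros cx cy)
    show "?x 0 - ?y 0 + \<epsilon> * exp (Lc * 0) > 0"
      using sol_zero[OF solx ci0] sol_zero[OF soly ci] \<epsilon> by simp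
    show "r + Cf \<ge> 0" using r Cf_nn by simp
    show "0 \<le> t" by (rule t)
    fix u t' B assume u: "0 \<le> u" "u \<le> t'"
      and nn: "\<And>\<tau>. \<tau> \<in> {0..t'} \<Longrightarrow> 0 \<le> ?x \<tau> - ?y \<tau> + \<epsilon> * exp (Lc * \<tau>)"
      and bB: "\<And>\<tau>. \<tau> \<in> {u..t'} \<Longrightarrow> ?x \<tau> - ?y \<tau> + \<epsilon> * exp (Lc * \<tau>) \<le> B"
    have t'0: "0 \<le> t'" using u by simp
    note dx = sol_diff[OF solx ci0 u] and dy = sol_diff[OF soly ci[OF t'0] u]
    have der: "((\<lambda>s. \<epsilon> * exp (Lc * s)) has_real_derivative \<epsilon> * Lc * exp (Lc * s)) (at s)" for s
      by (auto intro!: derivative_eq_intros simp: algebra_simps)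
    have hi: "((\<lambda>s. \<epsilon> * Lc * exp (Lc * s)) has_integral \<epsilon> * exp (Lc * t') - \<epsilon> * exp (Lc * u)) {u..t'}"
      by (rule ftc_real[OF der u(2)])
    have int: "(\<lambda>s. Fn (\<lambda>_. 0) ?x s - Fn c ?y s + \<epsilon> * Lc * exp (Lc * s)) integrable_on {u..t'}"
      by (rule integrable_add[OF integrable_diff[OF dx(1) dy(1)] has_integral_integrable[OF hi]])
    have eq: "(?x t' - ?y t' + \<epsilon> * exp (Lc * t')) - (?x u - ?y u + \<epsilon> * exp (Lc * u))
        = integral {u..t'} (\<lambda>s. Fn (\<lambda>_. 0) ?x s - Fn c ?y s + \<epsilon> * Lc * exp (Lc * s))"
    proof -
      have e1: "integral {u..t'} (\<lambda>s. Fn (\<lambda>_. 0) ?x s - Fn c ?y s + \<epsilon> * Lc * exp (Lc * s))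
          = integral {u..t'} (\<lambda>s. Fn (\<lambda>_. 0) ?x s - Fn c ?y s) + integral {u..t'} (\<lambda>s. \<epsilon> * Lc * exp (Lc * s))"
        by (rule integral_add[OF integrable_diff[OF dx(1) dy(1)] has_integral_integrable[OF hi]])
      have e2: "integral {u..t'} (\<lambda>s. Fn (\<lambda>_. 0) ?x s - Fn c ?y s)
          = integral {u..t'} (Fn (\<lambda>_. 0) ?x) - integral {u..t'} (Fn c ?y)"
        by (rule integral_diff[OF dx(1) dy(1)])
      have e3: "integral {u..t'} (\<lambda>s. \<epsilon> * Lc * exp (Lc * s)) = \<epsilon> * exp (Lc * t') - \<epsilon> * exp (Lc * u)"
        by (rule integral_unique[OF hi])
      show ?thesis using e1 e2 e3 dx(2) dy(2) by linarith
    qed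
    have "integral {u..t'} (\<lambda>s. Fn (\<lambda>_. 0) ?x s - Fn c ?y s + \<epsilon> * Lc * exp (Lc * s)) \<ge> (t' - u) * (- (r + Cf) * B)"
    proof (rule integral_lower[OF int u(2)])
      fix s assume s: "s \<in> {u..t'}"
      have s0: "s \<ge> 0" using s u by auto
      define E where "E = \<epsilon> * exp (Lc * s)"
      have E: "E > 0" using \<epsilon> by (simp add: E_def)
      have yx: "?y \<tau> - ?x \<tau> \<le> E" if "\<tau> \<in> {0..s}" for \<tau>
      proof -
        have "?y \<tau> - ?x \<tau> \<le> \<epsilon> * exp (Lc * \<tau>)" using nn[of \<tau>] that s by auto
        also have "\<dots> \<le> E" unfolding E_def using \<epsilon> Lc_pos that by (intro mult_left_mono) auto
        finally show ?thesis .
      qed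
      have gd: "G ?y s - G ?x s \<le> Aint * E"
        using G_diff[OF cy cx s0 less_imp_le[OF E] yx] xex xey by simp
      have eqa: "\<bar>G ?y s - Aint * E - G ?y s\<bar> = Aint * E" using Aint_nn E by simp
      have "f0 (?x s) (G ?x s) \<ge> f0 (?x s) (G ?y s - Aint * E)" by (rule f0_mono2) (use gd in simp)
      moreover have "f0 (?x s) (G ?y s - Aint * E) \<ge> f0 (?y s) (G ?y s) - Cf * (\<bar>?x s - ?y s\<bar> + Aint * E)"
        using f0_lower[where xa="?x s" and ya="G ?y s - Aint * E" and xb="?y s" and yb="G ?y s"] unfolding eqa .
      ultimately have f: "f0 (?x s) (G ?x s) - f0 (?y s) (G ?y s) \<ge> - Cf * (\<bar>?x s - ?y s\<bar> + Aint * E)" by linarith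
      have vs: "?x s - ?y s + E \<ge> 0" using nn[of s] s u by (auto simp: E_def)
      have w: "\<bar>?x s - ?y s\<bar> \<le> (?x s - ?y s + E) + E" using vs E by (simp add: abs_le_iff)
      have Fd: "Fn (\<lambda>_. 0) ?x s - Fn c ?y s = r * (?x s - ?y s) + (f0 (?x s) (G ?x s) - f0 (?y s) (G ?y s)) + c s"
        unfolding Fn_def by (simp add: algebra_simps)
      have rw: "r * (?x s - ?y s) \<ge> r * (- \<bar>?x s - ?y s\<bar>)" using r by (intro mult_left_mono) auto
      have le: "\<epsilon> * Lc * exp (Lc * s) = Lc * E" by (simp add: E_def)
      have "Fn (\<lambda>_. 0) ?x s - Fn c ?y s + \<epsilon> * Lc * exp (Lc * s)
          \<ge> - r * \<bar>?x s - ?y s\<bar> - Cf * (\<bar>?x s - ?y s\<bar> + Aint * E) + Lc * E"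
        using Fd f rw le cpos[OF s0] by linarith
      also have "- r * \<bar>?x s - ?y s\<bar> - Cf * (\<bar>?x s - ?y s\<bar> + Aint * E) + Lc * E
          = - (r + Cf) * \<bar>?x s - ?y s\<bar> + (r + Cf) * E" by (simp add: Lc_def algebra_simps)
      also have "\<dots> \<ge> - (r + Cf) * ((?x s - ?y s + E) + E) + (r + Cf) * E"
        using w r Cf_nn by (simp add: mult_left_mono)
      also have "- (r + Cf) * ((?x s - ?y s + E) + E) + (r + Cf) * E = - (r + Cf) * (?x s - ?y s + E)"
        by (simp add: algebra_simps)
      also have "\<dots> \<ge> - (r + Cf) * B" using bB[OF s] r Cf_nn by (simp add: E_def mult_left_mono)
      finally show "Fn (\<lambda>_. 0) ?x s - Fn c ?y s + \<epsilon> * Lc * exp (Lc * s) \<ge> - (r + Cf) * B" .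
    qed
    thus "(?x t' - ?y t' + \<epsilon> * exp (Lc * t')) - (?x u - ?y u + \<epsilon> * exp (Lc * u)) \<ge> - (r + Cf) * (t' - u) * B"
      unfolding eq by (simp add: algebra_simps)
  qed
  have "\<epsilon> * exp (Lc * t) = (?y t - ?x t) / 2" by (simp add: \<epsilon>_def)
  thus False using vpos contra by simp
qed

end
lemma abs_le_sq2: "\<bar>y::real\<bar> \<le> 1 + y^2"
proof -
  have "0 \<le> (\<bar>y\<bar> - 1)^2" by simp
  hence "2 * \<bar>y\<bar> \<le> \<bar>y\<bar> * \<bar>y\<bar> + 1" by (simp add: power2_eq_square algebra_simps)
  hence "2 * \<bar>y\<bar> \<le> y * y + 1" by (simp add: abs_mult_self_eq)
  thus ?thesis by (simp add: power2_eq_square)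
qed

lemma L2_int: "L2 T g \<Longrightarrow> set_integrable lborel {-T..0} g"
proof -
  assume L: "L2 T g"
  show ?thesis
  proof (rule set_integrable_bound[where f="\<lambda>x. 1 + (g x)^2"])
    have "set_integrable lborel {-T..0} (\<lambda>x. 1::real)"
      unfolding set_integrable_def by (rule borel_integrable_compact) (auto intro: continuous_intros)
    moreover have "set_integrable lborel {-T..0} (\<lambda>x. (g x)^2)" using L unfolding L2_def by simp
    ultimately show "set_integrable lborel {-T..0} (\<lambda>x. 1 + (g x)^2)" by (rule set_integral_add)
    show "set_borel_measurable lborel {-T..0} g" using L unfolding L2_def by simp
    show "AE x\<in>{-T..0} in lborel. norm (g x) \<le> norm (1 + (g x)^2)"
      using abs_le_sq2 by (intro AE_I2 impI) simp
  qed
qed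

lemma W12_cont:
  assumes W: "W12 T a" and T: "T > 0"
  shows "continuous_on {-T..0} a"
proof -
  obtain a' where L: "L2 T a'" and eq: "\<forall>t\<in>{-T..0}. a t = a (-T) + (LINT s:{-T..t}|lborel. a' s)"
    using W unfolding W12_def by blast
  have si: "set_integrable lborel {-T..0} a'" by (rule L2_int[OF L])
  have hk: "a' integrable_on {-T..0}" by (rule set_borel_integral_eq_integral(1)[OF si])
  have li: "(LINT s:{-T..t}|lborel. a' s) = integral {-T..t} a'" if "t \<in> {-T..0}" for t
    by (rule set_borel_integral_eq_integral(2)[OF set_integrable_subset[OF si]]) (use that in auto)
  have eq2: "a (-T) + integral {-T..t} a' = a t" if "t \<in> {-T..0}" for t
  proof -
    have "a t = a (-T) + (LINT s:{-T..t}|lborel. a' s)" using eq that by blast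
    thus ?thesis using li[OF that] by linarith
  qed
  have c: "continuous_on {-T..0} (\<lambda>t. a (-T) + integral {-T..t} a')"
    by (intro continuous_on_add continuous_on_const indefinite_integral_continuous_1 hk)
  show ?thesis by (rule continuous_on_eq[OF c]) (rule eq2)
qed

lemma ennreal_add_le: "(b::real) \<ge> 0 \<Longrightarrow> ennreal (x + b) \<le> ennreal x + ennreal b"
proof (cases "x \<ge> 0")
  case True
  assume "b \<ge> 0" thus ?thesis using True by simp
next
  case False
  assume b: "b \<ge> 0"
  have "ennreal (x + b) \<le> ennreal b" using False by (intro ennreal_leI) simp
  also have "\<dots> \<le> ennreal x + ennreal b" by simp
  finally show ?thesis .
qed

lemma exp_nn_finite:
  assumes \<rho>: "\<rho> > 0" and C: "C \<ge> 0"
  shows "(\<integral>\<^sup>+t. indicator {0..} t * ennreal (C * exp (- \<rho> * t)) \<partial>lborel) < \<infinity>"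
proof -
  have hi: "((\<lambda>t. C * exp (- \<rho> * t)) has_integral C * (exp (- \<rho> * 0) / \<rho>)) {0..}"
    by (intro has_integral_mult_right has_integral_exp_minus_to_infinity \<rho>)
  have "integral\<^sup>N lborel (\<lambda>x. indicator {0..} x * (C * exp (- \<rho> * x))) = C * (exp (- \<rho> * 0) / \<rho>)"
    by (rule nn_integral_has_integral_lebesgue[OF _ hi]) (use C in simp)
  moreover have "integral\<^sup>N lborel (\<lambda>x. indicator {0..} x * (C * exp (- \<rho> * x)))
      = (\<integral>\<^sup>+t. indicator {0..} t * ennreal (C * exp (- \<rho> * t)) \<partial>lborel)"
    by (rule nn_integral_cong) (simp split: split_indicator)
  ultimately show ?thesis by (metis ennreal_less_top infinity_ennreal_def)
qed

lemma eint_lower: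
  fixes g h :: "real \<Rightarrow> real"
  assumes hm[measurable]: "h \<in> borel_measurable borel" and \<rho>: "\<rho> > 0" and C: "C \<ge> 0"
    and hint: "eint h {0..} > -\<infinity>"
    and hpos: "(\<integral>\<^sup>+t. indicator {0..} t * ennreal (h t) \<partial>lborel) < \<infinity>"
    and bound: "\<And>t. t \<ge> 0 \<Longrightarrow> g t \<ge> h t - C * exp (- \<rho> * t)"
  shows "eint g {0..} > -\<infinity>"
proof -
  define Ph where "Ph = (\<integral>\<^sup>+t. indicator {0..} t * ennreal (h t) \<partial>lborel)"
  define Qh where "Qh = (\<integral>\<^sup>+t. indicator {0..} t * ennreal (- h t) \<partial>lborel)"
  define Pg where "Pg = (\<integral>\<^sup>+t. indicator {0..} t * ennreal (g t) \<partial>lborel)"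
  define Qg where "Qg = (\<integral>\<^sup>+t. indicator {0..} t * ennreal (- g t) \<partial>lborel)"
  have Qh: "Qh < top"
  proof (rule ccontr)
    assume "\<not> Qh < top"
    hence "Qh = top" using top.not_eq_extremum by blast
    moreover have "enn2ereal Ph < \<infinity>" using hpos unfolding Ph_def by (simp add: less_ennreal.rep_eq)
    moreover have "enn2ereal Ph \<ge> 0" by (simp add: enn2ereal_nonneg)
    ultimately have "enn2ereal Ph - enn2ereal Qh = -\<infinity>" by (cases "enn2ereal Ph") auto
    thus False using hint unfolding eint_def Ph_def Qh_def by simp
  qed
  have "Qg \<le> (\<integral>\<^sup>+t. indicator {0..} t * ennreal (- h t) + indicator {0..} t * ennreal (C * exp (- \<rho> * t)) \<partial>lborel)"
    unfolding Qg_def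
  proof (rule nn_integral_mono)
    fix t :: real
    show "indicator {0..} t * ennreal (- g t)
        \<le> indicator {0..} t * ennreal (- h t) + indicator {0..} t * ennreal (C * exp (- \<rho> * t))"
    proof (cases "t \<ge> 0")
      case True
      have "ennreal (- g t) \<le> ennreal (- h t + C * exp (- \<rho> * t))"
        using bound[OF True] by (intro ennreal_leI) simp
      also have "\<dots> \<le> ennreal (- h t) + ennreal (C * exp (- \<rho> * t))"
        by (rule ennreal_add_le) (use C in simp)
      finally show ?thesis using True by simp
    qed simp
  qed
  also have "\<dots> = Qh + (\<integral>\<^sup>+t. indicator {0..} t * ennreal (C * exp (- \<rho> * t)) \<partial>lborel)"
    unfolding Qh_def by (rule nn_integral_add) measurable
  also have "\<dots> < top" using Qh exp_nn_finite[OF \<rho> C] by (simp add: ennreal_add_less_top)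
  finally have Qg: "Qg < top" .
  have "enn2ereal Qg < \<infinity>" using Qg by (simp add: less_ennreal.rep_eq)
  moreover have "enn2ereal Pg \<ge> 0" by (simp add: enn2ereal_nonneg)
  ultimately have "enn2ereal Pg - enn2ereal Qg > -\<infinity>"
    by (cases "enn2ereal Pg"; cases "enn2ereal Qg") auto
  thus ?thesis unfolding eint_def Pg_def Qg_def .
qed






theorem proposition2p3:
  fixes T r \<rho> Cf :: real and a :: "real \<Rightarrow> real" and f0 :: "real \<Rightarrow> real \<Rightarrow> real"
    and U1 U2 :: "real \<Rightarrow> real"
  assumes T: "T > 0" and r: "r > 0" and rho: "\<rho> > 0"
    and a_W12: "W12 T a" and a_nonneg: "\<forall>t\<in>{-T..0}. 0 \<le> a t" and a_T: "a (-T) = 0"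
    and f0_concave: "concave_on ({0..} \<times> UNIV) (\<lambda>(x, y). f0 x y)"
    and f0_mono: "\<forall>x\<ge>0. mono (f0 x)"
    and f0_lip: "Cf-lipschitz_on ({0..} \<times> UNIV) (\<lambda>(x, y). f0 x y)"
    and f0_pos: "\<forall>y>0. f0 0 y > 0"
    and f0_ext: "\<forall>x<0. \<forall>y. f0 x y = f0 0 y"
    and U1_cont: "continuous_on {0..} U1"
    and U1_C2: "\<exists>U1' U1''. (\<forall>x>0. (U1 has_real_derivative U1' x) (at x)
                                 \<and> (U1' has_real_derivative U1'' x) (at x)
                                 \<and> U1' x > 0 \<and> U1'' x < 0)
                 \<and> continuous_on {0<..} U1''
                 \<and> filterlim U1' at_top (at_right 0)"
    and U1_bdd: "bounded (U1 ` {0..})"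
    and U2_cont: "continuous_on {0<..} U2"
    and U2_incr: "strict_mono_on {0<..} U2"
    and U2_concave: "concave_on {0<..} U2"
    and U2_bdd: "bdd_above (U2 ` {0<..})"
    and U2_int: "eint (\<lambda>t. exp (- \<rho> * t) * U2 (exp (- Cf * t))) {0..} > -\<infinity>"
  shows "Hpp T \<subseteq> DV T r \<rho> a f0 U1 U2 \<and>
         DV T r \<rho> a f0 U1 U2 = {\<eta> \<in> Hplus T. (\<lambda>_. 0) \<in> admissible T r a f0 \<eta>}"
proof -
  have Cf0: "Cf \<ge> 0" using f0_lip by (simp add: lipschitz_on_def)
  have a_cont: "continuous_on {-T..0} a" by (rule W12_cont[OF a_W12 T])
  have loc: "dde T r Cf a f0 \<eta>1" if "L2 T \<eta>1" for \<eta>1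
    unfolding dde_def using T r a_cont a_nonneg f0_lip f0_mono f0_ext f0_pos that by blast
  define S0 where "S0 = {\<eta> \<in> Hplus T. (\<lambda>_. 0) \<in> admissible T r a f0 \<eta>}"
  have ctrl0: "ctrl (\<lambda>_. 0)" by (simp add: ctrl_def set_integrable_def)
  have U2mono: "U2 x \<le> U2 y" if "0 < x" "x \<le> y" for x y
    using strict_mono_on_leD[OF U2_incr, of x y] that by auto
  have A: "Hpp T \<subseteq> S0"
  proof
    fix \<eta> assume \<eta>: "\<eta> \<in> Hpp T"
    obtain \<eta>0 \<eta>1 where e: "\<eta> = (\<eta>0, \<eta>1)" by (cases \<eta>)
    from \<eta> have h: "\<eta>0 > 0" "L2 T \<eta>1" "AE \<xi> in lborel. \<xi> \<in> {-T..0} \<longrightarrow> 0 \<le> \<eta>1 \<xi>"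
      by (auto simp: Hpp_def Hplus_def e)
    interpret dde T r Cf a f0 \<eta>1 by (rule loc[OF h(2)])
    have "\<forall>t\<ge>0. state T r a f0 (\<eta>0, \<eta>1) (\<lambda>_. 0) t > 0" using pos_Hpp[OF h(1) h(3)] by auto
    thus "\<eta> \<in> S0" using \<eta> ctrl0 by (auto simp: S0_def admissible_def e Hpp_def)
  qed
  have B: "S0 \<subseteq> DV T r \<rho> a f0 U1 U2"
  proof
    fix \<eta> assume \<eta>: "\<eta> \<in> S0"
    obtain \<eta>0 \<eta>1 where e: "\<eta> = (\<eta>0, \<eta>1)" by (cases \<eta>)
    from \<eta> have h: "\<eta>0 > 0" "L2 T \<eta>1" and adm: "(\<lambda>_. 0) \<in> admissible T r a f0 (\<eta>0, \<eta>1)"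
      by (auto simp: S0_def Hplus_def e)
    interpret dde T r Cf a f0 \<eta>1 by (rule loc[OF h(2)])
    let ?x = "state T r a f0 (\<eta>0, \<eta>1) (\<lambda>_. 0)"
    have pos: "\<And>t. t \<ge> 0 \<Longrightarrow> ?x t > 0" using adm by (auto simp: admissible_def)
    obtain t0 m where m: "m > 0" "\<forall>t\<in>{0..t0}. ?x t \<ge> m" "\<forall>t\<ge>t0. ?x t \<ge> exp (- Cf * t)"
      using lower_adm0[OF pos] by blast
    define C0 where "C0 = \<bar>U2 1 - U2 m\<bar> + \<bar>U1 0\<bar>"
    have C0: "C0 \<ge> 0" by (simp add: C0_def)
    have bnd: "exp (- \<rho> * t) * (U1 0 + U2 (?x t)) \<ge> exp (- \<rho> * t) * U2 (exp (- Cf * t)) - C0 * exp (- \<rho> * t)"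
      if t: "t \<ge> 0" for t
    proof -
      have e1: "exp (- Cf * t) \<le> 1" using Cf0 t by simp
      have "U2 (?x t) \<ge> U2 (exp (- Cf * t)) - \<bar>U2 1 - U2 m\<bar>"
      proof (cases "t \<le> t0")
        case True
        have "U2 (?x t) \<ge> U2 m" using U2mono[OF m(1)] m(2) True t by auto
        moreover have "U2 (exp (- Cf * t)) \<le> U2 1" using U2mono[OF _ e1] by simp
        ultimately show ?thesis by linarith
      next
        case False
        thus ?thesis using U2mono[of "exp (- Cf * t)" "?x t"] m(3) by auto
      qed
      hence "U1 0 + U2 (?x t) \<ge> U2 (exp (- Cf * t)) - C0" unfolding C0_def by linarith
      hence "exp (- \<rho> * t) * (U1 0 + U2 (?x t)) \<ge> exp (- \<rho> * t) * (U2 (exp (- Cf * t)) - C0)"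
        by (intro mult_left_mono) auto
      thus ?thesis by (simp add: algebra_simps)
    qed
    have cU: "continuous_on UNIV (\<lambda>t. U2 (exp (- Cf * t)))"
      by (rule continuous_on_compose2[OF U2_cont]) (auto intro!: continuous_intros)
    have hm: "(\<lambda>t. exp (- \<rho> * t) * U2 (exp (- Cf * t))) \<in> borel_measurable borel"
      by (intro borel_measurable_continuous_onI continuous_intros cU)
    have hpos: "(\<integral>\<^sup>+t. indicator {0..} t * ennreal (exp (- \<rho> * t) * U2 (exp (- Cf * t))) \<partial>lborel) < \<infinity>"
    proof -
      have "(\<integral>\<^sup>+t. indicator {0..} t * ennreal (exp (- \<rho> * t) * U2 (exp (- Cf * t))) \<partial>lborel)
          \<le> (\<integral>\<^sup>+t. indicator {0..} t * ennreal (max 0 (U2 1) * exp (- \<rho> * t)) \<partial>lborel)"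
      proof (rule nn_integral_mono)
        fix t :: real
        show "indicator {0..} t * ennreal (exp (- \<rho> * t) * U2 (exp (- Cf * t)))
            \<le> indicator {0..} t * ennreal (max 0 (U2 1) * exp (- \<rho> * t))"
        proof (cases "t \<ge> 0")
          case True
          have "U2 (exp (- Cf * t)) \<le> max 0 (U2 1)" using U2mono[of "exp (- Cf * t)" 1] Cf0 True by simp
          hence "exp (- \<rho> * t) * U2 (exp (- Cf * t)) \<le> max 0 (U2 1) * exp (- \<rho> * t)"
            by (simp add: mult.commute mult_left_mono)
          thus ?thesis using True by (simp add: ennreal_leI)
        qed simp
      qed
      also have "\<dots> < \<infinity>" by (rule exp_nn_finite[OF rho]) simp
      finally show ?thesis .
    qed
    have "J T r \<rho> a f0 U1 U2 (\<eta>0, \<eta>1) (\<lambda>_. 0) > -\<infinity>"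
      unfolding J_def by (rule eint_lower[OF hm rho C0 U2_int hpos]) (use bnd in simp)
    moreover have "J T r \<rho> a f0 U1 U2 (\<eta>0, \<eta>1) (\<lambda>_. 0) \<le> V T r \<rho> a f0 U1 U2 (\<eta>0, \<eta>1)"
      unfolding V_def by (rule SUP_upper[OF adm])
    ultimately show "\<eta> \<in> DV T r \<rho> a f0 U1 U2" using h by (auto simp: DV_def Hplus_def e)
  qed
  have C: "DV T r \<rho> a f0 U1 U2 \<subseteq> S0"
  proof
    fix \<eta> assume \<eta>: "\<eta> \<in> DV T r \<rho> a f0 U1 U2"
    obtain \<eta>0 \<eta>1 where e: "\<eta> = (\<eta>0, \<eta>1)" by (cases \<eta>)
    from \<eta> have h: "\<eta>0 > 0" "L2 T \<eta>1" and Vf: "V T r \<rho> a f0 U1 U2 (\<eta>0, \<eta>1) > -\<infinity>"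
      by (auto simp: DV_def Hplus_def e)
    interpret dde T r Cf a f0 \<eta>1 by (rule loc[OF h(2)])
    have "admissible T r a f0 (\<eta>0, \<eta>1) \<noteq> {}"
    proof
      assume "admissible T r a f0 (\<eta>0, \<eta>1) = {}"
      hence "V T r \<rho> a f0 U1 U2 (\<eta>0, \<eta>1) = -\<infinity>" unfolding V_def by (simp add: bot_ereal_def)
      thus False using Vf by simp
    qed
    then obtain c where c: "c \<in> admissible T r a f0 (\<eta>0, \<eta>1)" by blast
    hence cpos: "\<And>t. t \<ge> 0 \<Longrightarrow> 0 \<le> c t" and ci: "\<And>t. t \<ge> 0 \<Longrightarrow> set_integrable lborel {0..t} c"
      and sp: "\<And>t. t \<ge> 0 \<Longrightarrow> state T r a f0 (\<eta>0, \<eta>1) c t > 0"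
      by (auto simp: admissible_def ctrl_def)
    have "state T r a f0 (\<eta>0, \<eta>1) (\<lambda>_. 0) t > 0" if "t \<ge> 0" for t
    proof -
      have "state T r a f0 (\<eta>0, \<eta>1) c t \<le> state T r a f0 (\<eta>0, \<eta>1) (\<lambda>_. 0) t"
        by (rule comparison) (use cpos ci that in auto)
      thus ?thesis using sp[OF that] by linarith
    qed
    hence "(\<lambda>_. 0) \<in> admissible T r a f0 (\<eta>0, \<eta>1)" using ctrl0 by (auto simp: admissible_def)
    thus "\<eta> \<in> S0" using \<eta> by (auto simp: S0_def DV_def e)
  qed
  show ?thesis unfolding S0_def[symmetric] using A B C by blast
qed

end
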